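(* Let $p_*=(p_1\ge p_2\ge\dots\ge p_\sigma)\in\mathcal P_n$, let $V_*,V'_*\in\mathcal F$ with $a_{V_*,V'_*}=w_{p_*}$, and let $g\in Is(V)$ with $gV_*=V'_*$. Then there exist vectors $v_1,\dots,v_\sigma\in V$, each unique up to multiplication by $\pm1$, such that, setting $Z_k=S(v_k,gv_k,\dots,g^{p_k-1}v_k)$ for $k\in[1,\sigma]$, for every $r\in[1,\sigma]$: (i) $V_{p_{<r}+i}=Z_1+\dots+Z_{r-1}+S(v_r,gv_r,\dots,g^{i-1}v_r)$ for $i\in[0,p_r]$; (ii) $(g^iv_t,v_r)=0$ for all $1\le t<r$ and $i\in[-p_t,p_t-1]$; (iii) $(v_r,g^iv_r)=0$ for $i\in[-p_r+1,p_r-1]$, $Q(v_r)=0$, and $(v_r,g^{p_r}v_r)=1$; (iv) the vectors $g^{-p_t+i}v_t$ ($t\in[1,r]$, $i\in[0,2p_t-1]$) are linearly independent; (v) setting $E_r=S(g^{-p_t+i}v_t;\ t\in[1,r],\ i\in[0,p_t-1])$, one has $V=V_{p_{\le r}}\oplus E_r^\perp$. If $\kappa=1$, there exists moreover a vector $v_{\sigma+1}\in V$ (unique up to $\pm1$) such that $(g^iv_t,v_{\sigma+1})=0$ for all $t\in[1,\sigma]$, $i\in[-p_t,p_t-1]$, and $Q(v_{\sigma+1})=1$. Finally: (vi) if $\kappa=0$, the vectors $g^jv_t$ ($t\in[1,\sigma]$, $j\in[-p_t,p_t-1]$) form a basis of $V$; if $\kappa=1$, these vectors together with $v_{\sigma+1}$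 form a basis of $V$.
   Context: Let $\mathbf k$ be an algebraically closed field of characteristic $p$. Let $V$ be a $\mathbf k$-vector space of dimension $\mathfrak n\ge3$, $\kappa\in\{0,1\}$ with $\kappa\equiv\mathfrak n\pmod 2$, and $n=(\mathfrak n-\kappa)/2$. $V$ carries a bilinear form $(\,,)$ and a quadratic form $Q$ such that either (i) $Q=0$, $(x,x)=0$ for all $x$, and $V^\perp=0$; or (ii) $Q\ne0$, $(x,y)=Q(x+y)-Q(x)-Q(y)$, and $Q|_{V^\perp}$ is injective. Here $V'^\perp=\{x:(x,V')=0\}$. $Is(V)$ is the group of $g\in GL(V)$ with $(gx,gy)=(x,y)$ and $Q(gx)=Q(x)$. $\mathcal F$ is the set of sequences $V_*=(0=V_0\subset V_1\subset\dots\subset V_{\mathfrak n}=V)$ with $\dim V_i=i$, such that $Q|_{V_i}=0$ and $V_i^\perp=V_{\mathfrak n-i}$ for all $i\in[0,n]$. For $V_*,V'_*\in\mathcal F$ define the permutation $a_{V_*,V'_*}:i\mapsto a_i$ of $[1,\mathfrak n]$: for $i\in[0,\mathfrak n]$ let $X_i=\{j\in[1,\mathfrak n]: V'_i\cap V_j\neq V'_i\cap V_{j-1}\}$; then $\emptyset=X_0\subset X_1\subset\dots\subset X_{\mathfrak n}=[1,\mathfrak n]$ and $X_i=X_{i-1}\sqcup\{a_i\}$. $\mathcal P_n$ is the set of sequences $p_1\ge\dots\ge p_\sigma$ of integers $\ge1$ with sum $n$; for such $p_*$ set $p_{<r}=\sum_{r'<r}p_{r'}$, $p_{\le r}=\sum_{r'\le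 r}p_{r'}$. $w_{p_*}$ is the permutation of $[1,\mathfrak n]$ which, for each $r\in[1,\sigma]$, has the cycle $p_{<r}+1\mapsto p_{<r}+2\mapsto\dots\mapsto p_{\le r}\mapsto \mathfrak n-p_{<r}\mapsto\mathfrak n-p_{<r}-1\mapsto\dots\mapsto\mathfrak n-p_{\le r}+1\mapsto p_{<r}+1$, and (if $\kappa=1$) fixes $n+1$. For vectors $v_1,\dots,v_s$, $S(v_1,\dots,v_s)$ denotes their span. $[a,b]=\{c\in\mathbb Z:a\le c\le b\}$. *)

theory Defs
  imports Complex_Main "HOL-Computational_Algebra.Polynomial"
begin

definition alg_closed :: "'a::field itself \<Rightarrow> bool" where
  "alg_closed _ \<longleftrightarrow> (\<forall>f::'a poly. 0 < degree f \<longrightarrow> (\<exists>x. poly f x = 0))"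

definition bilinear_form :: "('a::field \<Rightarrow> 'v::ab_group_add \<Rightarrow> 'v) \<Rightarrow> ('v \<Rightarrow> 'v \<Rightarrow> 'a) \<Rightarrow> bool" where
  "bilinear_form scale B \<longleftrightarrow>
     (\<forall>x y z. B (x + y) z = B x z + B y z) \<and> (\<forall>x y z. B x (y + z) = B x y + B x z) \<and>
     (\<forall>c x y. B (scale c x) y = c * B x y) \<and> (\<forall>c x y. B x (scale c y) = c * B x y)"

definition perp :: "('v \<Rightarrow> 'v \<Rightarrow> 'a::zero) \<Rightarrow> 'v set \<Rightarrow> 'v set" where
  "perp B W = {x. \<forall>y\<in>W. B x y = 0}"

(* standing assumptions: (i) Q = 0, alternating, nondegenerate; or
   (ii) Q a nonzero quadratic form with polar form B, Q injective on V^perp *)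
definition form_setting :: "('a::field \<Rightarrow> 'v::ab_group_add \<Rightarrow> 'v) \<Rightarrow> ('v \<Rightarrow> 'v \<Rightarrow> 'a) \<Rightarrow> ('v \<Rightarrow> 'a) \<Rightarrow> bool" where
  "form_setting scale B Q \<longleftrightarrow> bilinear_form scale B \<and>
     ((Q = (\<lambda>_. 0) \<and> (\<forall>x. B x x = 0) \<and> perp B UNIV = {0}) \<or>
      (Q \<noteq> (\<lambda>_. 0) \<and> (\<forall>c x. Q (scale c x) = c * c * Q x) \<and>
       (\<forall>x y. B x y = Q (x + y) - Q x - Q y) \<and> inj_on Q (perp B UNIV)))"

definition isometry :: "('a::field \<Rightarrow> 'v::ab_group_add \<Rightarrow> 'v) \<Rightarrow> ('v \<Rightarrow> 'v \<Rightarrow> 'a) \<Rightarrow> ('v \<Rightarrow> 'a) \<Rightarrow> ('v \<Rightarrow> 'v) \<Rightarrow> bool" where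
  "isometry scale B Q g \<longleftrightarrow> Vector_Spaces.linear scale scale g \<and> bij g \<and>
     (\<forall>x y. B (g x) (g y) = B x y) \<and> (\<forall>x. Q (g x) = Q x)"

(* the set F of isotropic flags, indexed by i in [0,N], N = dim V, n = N div 2 *)
definition isoflag :: "('a::field \<Rightarrow> 'v::ab_group_add \<Rightarrow> 'v) \<Rightarrow> ('v \<Rightarrow> 'v \<Rightarrow> 'a) \<Rightarrow> ('v \<Rightarrow> 'a) \<Rightarrow> nat \<Rightarrow> (nat \<Rightarrow> 'v set) \<Rightarrow> bool" where
  "isoflag scale B Q N W \<longleftrightarrow>
     (\<forall>i\<le>N. module.subspace scale (W i) \<and> vector_space.dim scale (W i) = i) \<and>
     (\<forall>i\<in>{1..N}. W (i - 1) \<subseteq> W i) \<and> W 0 = {0} \<and> W N = UNIV \<and>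
     (\<forall>i\<le>N div 2. (\<forall>x\<in>W i. Q x = 0) \<and> perp B (W i) = W (N - i))"

definition relX :: "nat \<Rightarrow> (nat \<Rightarrow> 'v set) \<Rightarrow> (nat \<Rightarrow> 'v set) \<Rightarrow> nat \<Rightarrow> nat set" where
  "relX N W W' i = {j\<in>{1..N}. W' i \<inter> W j \<noteq> W' i \<inter> W (j - 1)}"

definition relpos :: "nat \<Rightarrow> (nat \<Rightarrow> 'v set) \<Rightarrow> (nat \<Rightarrow> 'v set) \<Rightarrow> nat \<Rightarrow> nat" where
  "relpos N W W' i = (THE j. j \<in> relX N W W' i \<and> j \<notin> relX N W W' (i - 1))"

(* partitions p_1 \<ge> ... \<ge> p_sigma as lists; p_r = p ! (r - 1) *)
definition partition_of :: "nat list \<Rightarrow> nat \<Rightarrow> bool" where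
  "partition_of p n \<longleftrightarrow> sorted_wrt (\<ge>) p \<and> (\<forall>x\<in>set p. 1 \<le> x) \<and> sum_list p = n"

definition plt :: "nat list \<Rightarrow> nat \<Rightarrow> nat" where
  "plt p r = sum_list (take (r - 1) p)"

definition ple :: "nat list \<Rightarrow> nat \<Rightarrow> nat" where
  "ple p r = sum_list (take r p)"

definition wblock :: "nat list \<Rightarrow> nat \<Rightarrow> nat \<Rightarrow> nat set" where
  "wblock p N r = {plt p r <.. ple p r} \<union> {N - ple p r <.. N - plt p r}"

(* the r-th cycle p_{<r}+1 \<mapsto> ... \<mapsto> p_{\<le>r} \<mapsto> N-p_{<r} \<mapsto> ... \<mapsto> N-p_{\<le>r}+1 \<mapsto> p_{<r}+1 *)
definition wcyc :: "nat list \<Rightarrow> nat \<Rightarrow> nat \<Rightarrow> nat \<Rightarrow> nat" where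
  "wcyc p N r i =
     (if plt p r < i \<and> i < ple p r then i + 1
      else if i = ple p r then N - plt p r
      else if N - ple p r + 1 < i \<and> i \<le> N - plt p r then i - 1
      else if i = N - ple p r + 1 then plt p r + 1
      else i)"

definition wperm :: "nat list \<Rightarrow> nat \<Rightarrow> nat \<Rightarrow> nat" where
  "wperm p N i =
     (if \<exists>r\<in>{1..length p}. i \<in> wblock p N r
      then wcyc p N (THE r. r \<in> {1..length p} \<and> i \<in> wblock p N r) i
      else i)"

definition gpow :: "('v \<Rightarrow> 'v) \<Rightarrow> int \<Rightarrow> 'v \<Rightarrow> 'v" where
  "gpow g i = (if 0 \<le> i then g ^^ nat i else (inv g) ^^ nat (- i))"

definition indep_family :: "('a::field \<Rightarrow> 'v::ab_group_add \<Rightarrow> 'v) \<Rightarrow> ('i \<Rightarrow> 'v) \<Rightarrow> 'i set \<Rightarrow> bool" where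
  "indep_family scale f I \<longleftrightarrow> inj_on f I \<and> \<not> module.dependent scale (f ` I)"

definition basis_family :: "('a::field \<Rightarrow> 'v::ab_group_add \<Rightarrow> 'v) \<Rightarrow> ('i \<Rightarrow> 'v) \<Rightarrow> 'i set \<Rightarrow> bool" where
  "basis_family scale f I \<longleftrightarrow> indep_family scale f I \<and> module.span scale (f ` I) = UNIV"

definition direct_sum_UNIV :: "'v::ab_group_add set \<Rightarrow> 'v set \<Rightarrow> bool" where
  "direct_sum_UNIV A C \<longleftrightarrow> A \<inter> C = {0} \<and> (\<forall>x. \<exists>a\<in>A. \<exists>c\<in>C. x = a + c)"

definition props_i_v :: "('a::field \<Rightarrow> 'v::ab_group_add \<Rightarrow> 'v) \<Rightarrow> ('v \<Rightarrow> 'v \<Rightarrow> 'a) \<Rightarrow> ('v \<Rightarrow> 'a)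
    \<Rightarrow> ('v \<Rightarrow> 'v) \<Rightarrow> (nat \<Rightarrow> 'v set) \<Rightarrow> nat list \<Rightarrow> (nat \<Rightarrow> 'v) \<Rightarrow> bool" where
  "props_i_v scale B Q g W p v \<longleftrightarrow>
    (\<forall>r\<in>{1..length p}.
      \<comment> \<open>(i): Z_k = S(v_k, g v_k, ..., g^{p_k-1} v_k)\<close>
      (\<forall>i\<le>p ! (r - 1).
         W (plt p r + i) =
           module.span scale ((\<Union>t\<in>{1..<r}. module.span scale ((\<lambda>j. gpow g (int j) (v t)) ` {..<p ! (t - 1)}))
                              \<union> (\<lambda>j. gpow g (int j) (v r)) ` {..<i})) \<and>
      \<comment> \<open>(ii)\<close>
      (\<forall>t\<in>{1..<r}. \<forall>i\<in>{- int (p ! (t - 1)) .. int (p ! (t - 1)) - 1}. B (gpow g i (v t)) (v r) = 0) \<and>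
      \<comment> \<open>(iii)\<close>
      (\<forall>i\<in>{- int (p ! (r - 1)) + 1 .. int (p ! (r - 1)) - 1}. B (v r) (gpow g i (v r)) = 0) \<and>
      Q (v r) = 0 \<and> B (v r) (gpow g (int (p ! (r - 1))) (v r)) = 1 \<and>
      \<comment> \<open>(iv)\<close>
      indep_family scale (\<lambda>(t, i). gpow g (- int (p ! (t - 1)) + int i) (v t))
        (SIGMA t:{1..r}. {..<2 * p ! (t - 1)}) \<and>
      \<comment> \<open>(v)\<close>
      direct_sum_UNIV (W (ple p r))
        (perp B (module.span scale ((\<lambda>(t, i). gpow g (- int (p ! (t - 1)) + int i) (v t))
                                      ` (SIGMA t:{1..r}. {..<p ! (t - 1)})))))"

definition props_last :: "('v \<Rightarrow> 'v \<Rightarrow> 'a::field) \<Rightarrow> ('v \<Rightarrow> 'a) \<Rightarrow> ('v \<Rightarrow> 'v) \<Rightarrow> nat list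
    \<Rightarrow> (nat \<Rightarrow> 'v) \<Rightarrow> 'v \<Rightarrow> bool" where
  "props_last B Q g p v u \<longleftrightarrow>
     (\<forall>t\<in>{1..length p}. \<forall>i\<in>{- int (p ! (t - 1)) .. int (p ! (t - 1)) - 1}. B (gpow g i (v t)) u = 0) \<and>
     Q u = 1"

definition full_family :: "('v \<Rightarrow> 'v) \<Rightarrow> nat list \<Rightarrow> (nat \<Rightarrow> 'v) \<Rightarrow> nat \<times> int \<Rightarrow> 'v" where
  "full_family g p v = (\<lambda>(t, j). gpow g j (v t))"

definition full_index :: "nat list \<Rightarrow> (nat \<times> int) set" where
  "full_index p = (SIGMA t:{1..length p}. {- int (p ! (t - 1)) .. int (p ! (t - 1)) - 1})"

end

theory Submission
  imports Defs
begin

locale ctx = vector_space scale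
  for scale :: "'a::field \<Rightarrow> 'v::ab_group_add \<Rightarrow> 'v" (infixr \<open>*s\<close> 75) +
  fixes B :: "'v \<Rightarrow> 'v \<Rightarrow> 'a" and Q :: "'v \<Rightarrow> 'a"
    and N :: nat and p :: "nat list"
    and W W' :: "nat \<Rightarrow> 'v set" and g :: "'v \<Rightarrow> 'v"
  assumes k: "alg_closed TYPE('a)"
    and fin: "\<exists>S. finite S \<and> span S = UNIV"
    and dimV: "dim (UNIV :: 'v set) = N"
    and N3: "3 \<le> N"
    and form: "form_setting scale B Q"
    and part: "partition_of p (N div 2)"
    and flagW: "isoflag scale B Q N W"
    and flagW': "isoflag scale B Q N W'"
    and relpos: "\<forall>i\<in>{1..N}. relpos N W W' i = wperm p N i"
    and iso: "isometry scale B Q g"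
    and gW: "\<forall>i\<le>N. g ` (W i) = W' i"
begin

definition "theBasis = (SOME b. finite b \<and> independent b \<and> span b = UNIV)"

lemma theBasis: "finite theBasis \<and> independent theBasis \<and> span theBasis = UNIV"
proof -
  obtain S where S: "finite S" "span S = UNIV" using fin by blast
  obtain b where b: "b \<subseteq> S" "independent b" "S \<subseteq> span b"
    using maximal_independent_subset[of S] by blast
  have "finite b" using b S finite_subset by blast
  moreover have "span b = UNIV" using b S
    by (metis span_eq_iff span_mono span_span subspace_span top.extremum_uniqueI)
  ultimately have "\<exists>b. finite b \<and> independent b \<and> span b = UNIV" using b by blast
  then show ?thesis unfolding theBasis_def by (rule someI_ex)
qed

sublocale fd: finite_dimensional_vector_space scale theBasis
  by unfold_locales (use theBasis in auto)

lemma dimension_N: "fd.dimension = N"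
  using dimV fd.dim_UNIV fd.dimension_def by simp

lemma span_eq_UNIV_iff: "span S = UNIV \<longleftrightarrow> dim S = N"
  using fd.dim_eq_full dimension_N by simp

lemma dim_le_N: "dim S \<le> N"
  using fd.dim_subset_UNIV dimension_N by simp

lemma bil: "bilinear_form scale B" using form unfolding form_setting_def by blast

lemma B_add1: "B (x + y) z = B x z + B y z" using bil unfolding bilinear_form_def by blast
lemma B_add2: "B x (y + z) = B x y + B x z" using bil unfolding bilinear_form_def by blast
lemma B_scale1: "B (c *s x) y = c * B x y" using bil unfolding bilinear_form_def by blast
lemma B_scale2: "B x (c *s y) = c * B x y" using bil unfolding bilinear_form_def by blast
lemma B_zero1[simp]: "B 0 y = 0" using B_scale1[of 0 0 y] by simp
lemma B_zero2[simp]: "B x 0 = 0" using B_scale2[of x 0 0] by simp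
lemma B_neg1: "B (- x) y = - B x y" using B_add1[of x "-x" y] by (metis add.commute eq_neg_iff_add_eq_0 B_zero1 add.right_inverse)
lemma B_neg2: "B x (- y) = - B x y" using B_add2[of x y "-y"] by (metis add.commute eq_neg_iff_add_eq_0 B_zero2 add.right_inverse)
lemma B_diff1: "B (x - y) z = B x z - B y z" using B_add1[of x "-y" z] B_neg1 by simp
lemma B_diff2: "B x (y - z) = B x y - B x z" using B_add2[of x y "-z"] B_neg2 by simp
lemma B_sum2: "B x (\<Sum>i\<in>I. f i) = (\<Sum>i\<in>I. B x (f i))"
  by (induction I rule: infinite_finite_induct) (auto simp: B_add2)
lemma B_sum1: "B (\<Sum>i\<in>I. f i) x = (\<Sum>i\<in>I. B (f i) x)"
  by (induction I rule: infinite_finite_induct) (auto simp: B_add1)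

lemma B_skew: "\<exists>e. (e = 1 \<or> e = -1) \<and> (\<forall>x y. B y x = e * B x y)"
proof -
  { assume alt: "\<forall>x. B x x = 0"
    have "B y x = - B x y" for x y
    proof -
      have "0 = B (x + y) (x + y)" using alt by simp
      also have "\<dots> = B x x + B x y + (B y x + B y y)" by (simp add: B_add1 B_add2 add.assoc)
      also have "\<dots> = B x y + B y x" using alt by simp
      finally show ?thesis by (metis add.commute eq_neg_iff_add_eq_0)
    qed
    hence ?thesis by (metis mult_minus1) }
  moreover
  { assume sym: "\<forall>x y. B x y = Q (x + y) - Q x - Q y"
    have "B y x = B x y" for x y using sym[rule_format, of x y] sym[rule_format, of y x] by (simp add: add.commute)
    hence ?thesis by (metis mult_1) }
  ultimately show ?thesis using form unfolding form_setting_def by blast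
qed

lemma B_refl: "B y x = 0 \<longleftrightarrow> B x y = 0"
proof -
  obtain e where e: "e = 1 \<or> e = -1" "\<And>x y. B y x = e * B x y" using B_skew by blast
  show ?thesis using e(1) e(2)[of x y] by auto
qed

lemma g_lin: "Vector_Spaces.linear scale scale g" using iso unfolding isometry_def by blast
lemma g_bij: "bij g" using iso unfolding isometry_def by blast
lemma g_B: "B (g x) (g y) = B x y" using iso unfolding isometry_def by blast
lemma g_Q: "Q (g x) = Q x" using iso unfolding isometry_def by blast
lemma g_inv1[simp]: "g (inv g x) = x" using g_bij by (simp add: bij_is_surj surj_f_inv_f)
lemma g_inv2[simp]: "inv g (g x) = x" using g_bij by (simp add: bij_is_inj inv_f_f)

lemma ginv_lin: "Vector_Spaces.linear scale scale (inv g)"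
proof -
  have "module_hom scale scale g" using g_lin by (simp add: module_hom_iff_linear)
  hence "module_hom scale scale (inv g)" using g_bij by (rule bij_module_hom_imp_inv_module_hom)
  thus ?thesis by (simp add: module_hom_iff_linear)
qed

lemma gp_succ: "gpow g (i + 1) x = g (gpow g i x)"
proof (cases "0 \<le> i")
  case True
  hence "nat (i + 1) = Suc (nat i)" by simp
  thus ?thesis using True by (simp add: gpow_def)
next
  case False
  show ?thesis
  proof (cases "i = -1")
    case True thus ?thesis by (simp add: gpow_def)
  next
    case F2: False
    hence "nat (- i) = Suc (nat (- (i + 1)))" using False by simp
    thus ?thesis using False F2 by (simp add: gpow_def)
  qed
qed

lemma gp_pred: "gpow g (i - 1) x = inv g (gpow g i x)"
  using gp_succ[of "i - 1" x] by simp

lemma gp_0[simp]: "gpow g 0 x = x" by (simp add: gpow_def)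

lemma gp_add: "gpow g (i + j) x = gpow g i (gpow g j x)"
proof (induction i rule: int_induct[where k=0])
  case base thus ?case by simp
next
  case (step1 i)
  have "gpow g (i + 1 + j) x = gpow g ((i + j) + 1) x" by (simp add: ac_simps)
  also have "\<dots> = g (gpow g (i + j) x)" by (rule gp_succ)
  finally show ?case using step1 by (simp add: gp_succ)
next
  case (step2 i)
  have "gpow g (i - 1 + j) x = gpow g ((i + j) - 1) x" by (rule arg_cong[where f="\<lambda>k. gpow g k x"]) simp
  also have "\<dots> = inv g (gpow g (i + j) x)" by (rule gp_pred)
  finally show ?case using step2 by (simp add: gp_pred)
qed

lemma gp_lin: "Vector_Spaces.linear scale scale (gpow g i)"
proof -
  have "Vector_Spaces.linear scale scale (f ^^ k)" if "Vector_Spaces.linear scale scale f" for f k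
  proof (induction k)
    case 0 thus ?case using linear_id by (simp add: id_def)
  next
    case (Suc k) thus ?case using Vector_Spaces.linear_compose[OF Suc that] by (simp add: o_def)
  qed
  thus ?thesis unfolding gpow_def using g_lin ginv_lin
    by (cases "0 \<le> i") (auto simp: fun_eq_iff)
qed

lemma gp_add_vec: "gpow g i (x + y) = gpow g i x + gpow g i y"
  using gp_lin[of i] unfolding Vector_Spaces.linear_iff by blast
lemma gp_scale: "gpow g i (c *s x) = c *s gpow g i x"
  using gp_lin[of i] unfolding Vector_Spaces.linear_iff by blast
lemma gp_zero[simp]: "gpow g i 0 = 0"
  using gp_scale[of i 0 0] by simp
lemma gp_neg: "gpow g i (- x) = - gpow g i x"
  using gp_add_vec[of i x "-x"] by (metis add.commute eq_neg_iff_add_eq_0 gp_zero add.right_inverse)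
lemma gp_diff: "gpow g i (x - y) = gpow g i x - gpow g i y"
  using gp_add_vec[of i x "-y"] gp_neg by simp

lemma gp_inv: "gpow g (- i) (gpow g i x) = x"
  using gp_add[of "-i" i x] by simp
lemma gp_inv': "gpow g i (gpow g (- i) x) = x"
  using gp_add[of i "-i" x] by simp

lemma gp_B: "B (gpow g i x) (gpow g i y) = B x y"
proof (induction i arbitrary: x y rule: int_induct[where k=0])
  case base thus ?case by simp
next
  case (step1 i) thus ?case by (simp add: gp_succ g_B)
next
  case (step2 i)
  have "B (inv g u) (inv g w) = B u w" for u w using g_B[of "inv g u" "inv g w"] by simp
  thus ?case using step2 by (simp add: gp_pred)
qed

lemma gp_Q: "Q (gpow g i x) = Q x"
proof (induction i arbitrary: x rule: int_induct[where k=0])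
  case base thus ?case by simp
next
  case (step1 i) thus ?case by (simp add: gp_succ g_Q)
next
  case (step2 i)
  have "Q (inv g u) = Q u" for u using g_Q[of "inv g u"] by simp
  thus ?case using step2 by (simp add: gp_pred)
qed

lemma gp_B_shift: "B (gpow g i x) y = B x (gpow g (- i) y)"
  using gp_B[of "-i" "gpow g i x" y] gp_inv by simp

lemma gp_eq_iff: "gpow g i x = gpow g i y \<longleftrightarrow> x = y"
  by (metis gp_inv)

lemma gp_g: "gpow g 1 x = g x" using gp_succ[of 0 x] by simp

lemma g_span: "g ` span S = span (g ` S)"
proof -
  interpret l: Vector_Spaces.linear scale scale g by (rule g_lin)
  show ?thesis by (simp add: l.span_image)
qed

end

context ctx begin

abbreviation "nn \<equiv> N div 2"
abbreviation "sig \<equiv> length p"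
definition P :: "nat \<Rightarrow> nat" where "P t = p ! (t - 1)"

lemma flag_facts:
  assumes "isoflag scale B Q N V"
  shows "\<And>i. i \<le> N \<Longrightarrow> subspace (V i)" "\<And>i. i \<le> N \<Longrightarrow> dim (V i) = i"
    "V 0 = {0}" "V N = UNIV" "\<And>i j. i \<le> j \<Longrightarrow> j \<le> N \<Longrightarrow> V i \<subseteq> V j"
    "\<And>i. i \<le> nn \<Longrightarrow> perp B (V i) = V (N - i)"
    "\<And>i x. i \<le> nn \<Longrightarrow> x \<in> V i \<Longrightarrow> Q x = 0"
proof -
  note a = assms[unfolded isoflag_def]
  show "\<And>i. i \<le> N \<Longrightarrow> subspace (V i)" "\<And>i. i \<le> N \<Longrightarrow> dim (V i) = i"
    using a by blast+
  show "V 0 = {0}" "V N = UNIV" using a by blast+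
  show "\<And>i. i \<le> nn \<Longrightarrow> perp B (V i) = V (N - i)"
    "\<And>i x. i \<le> nn \<Longrightarrow> x \<in> V i \<Longrightarrow> Q x = 0" using a by blast+
  show "\<And>i j. i \<le> j \<Longrightarrow> j \<le> N \<Longrightarrow> V i \<subseteq> V j"
  proof -
    fix i j :: nat assume ij: "i \<le> j" "j \<le> N"
    thus "V i \<subseteq> V j"
    proof (induction j)
      case 0 thus ?case by simp
    next
      case (Suc j)
      show ?case
      proof (cases "i = Suc j")
        case False
        hence "V i \<subseteq> V j" using Suc by simp
        moreover have h: "\<forall>i\<in>{1..N}. V (i - 1) \<subseteq> V i" using a by blast
        have "Suc j \<in> {1..N}" using Suc.prems by simp
        from bspec[OF h this] have "V j \<subseteq> V (Suc j)" by simp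
        ultimately show ?thesis by blast
      qed simp
    qed
  qed
qed

lemmas W_sub = flag_facts(1)[OF flagW]
lemmas W_dim = flag_facts(2)[OF flagW]
lemmas W_0 = flag_facts(3)[OF flagW]
lemmas W_N = flag_facts(4)[OF flagW]
lemmas W_mono = flag_facts(5)[OF flagW]
lemmas W_perp = flag_facts(6)[OF flagW]
lemmas W_Q = flag_facts(7)[OF flagW]
lemmas W'_sub = flag_facts(1)[OF flagW']
lemmas W'_dim = flag_facts(2)[OF flagW']
lemmas W'_mono = flag_facts(5)[OF flagW']

lemma nn_le: "nn \<le> N - nn" by simp

lemma W_iso: "x \<in> W nn \<Longrightarrow> y \<in> W nn \<Longrightarrow> B x y = 0"
proof -
  assume x: "x \<in> W nn" and y: "y \<in> W nn"
  have "W nn \<subseteq> W (N - nn)" using W_mono[OF nn_le] by simp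
  hence "x \<in> perp B (W nn)" using x W_perp[of nn] by auto
  thus ?thesis using y unfolding perp_def by auto
qed

lemma W_le_nn: "i \<le> nn \<Longrightarrow> W i \<subseteq> W nn" using W_mono by simp

lemma p_sorted: "sorted_wrt (\<ge>) p" and p_pos: "\<forall>x\<in>set p. 1 \<le> x" and p_sum: "sum_list p = nn"
  using part unfolding partition_of_def by auto

lemma P_pos: "1 \<le> t \<Longrightarrow> t \<le> sig \<Longrightarrow> 1 \<le> P t"
  using p_pos unfolding P_def by (simp add: nth_mem)

lemma P_anti: "1 \<le> t' \<Longrightarrow> t' \<le> t \<Longrightarrow> t \<le> sig \<Longrightarrow> P t \<le> P t'"
  using p_sorted unfolding P_def
  by (cases "t' = t") (auto simp: sorted_wrt_iff_nth_less)

lemma sum_take_mono: "a \<le> b \<Longrightarrow> sum_list (take a xs) \<le> sum_list (take (b::nat) (xs :: nat list))"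
proof -
  assume "a \<le> b"
  then obtain c where "b = a + c" using le_Suc_ex by blast
  thus ?thesis by (simp add: take_add)
qed

lemma ple_eq: "1 \<le> r \<Longrightarrow> r \<le> sig \<Longrightarrow> ple p r = plt p r + P r"
  unfolding ple_def plt_def P_def
  using take_Suc_conv_app_nth[of "r - 1" p] by simp

lemma plt_Suc: "plt p (Suc r) = ple p r" by (simp add: plt_def ple_def)

lemma ple_le: "ple p r \<le> nn"
  using sum_take_mono[of r "length p" p] p_sum by (cases "r \<le> sig") (auto simp: ple_def)

lemma plt_le_ple: "plt p r \<le> ple p r"
  unfolding plt_def ple_def by (rule sum_take_mono) simp

lemma ple_mono: "r \<le> r' \<Longrightarrow> ple p r \<le> ple p r'"
  unfolding ple_def by (rule sum_take_mono)

lemma ple_sig: "ple p sig = nn" using p_sum by (simp add: ple_def)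

end

context ctx begin
lemma relX_sub: "relX N W W' i \<subseteq> {1..N}" unfolding relX_def by auto

lemma relX_mono: "1 \<le> i \<Longrightarrow> i \<le> N \<Longrightarrow> relX N W W' (i - 1) \<subseteq> relX N W W' i"
proof
  fix j assume i: "1 \<le> i" "i \<le> N" and j: "j \<in> relX N W W' (i - 1)"
  hence j1: "j \<in> {1..N}" and ne: "W' (i - 1) \<inter> W j \<noteq> W' (i - 1) \<inter> W (j - 1)" unfolding relX_def by auto
  have "W (j - 1) \<subseteq> W j" using W_mono j1 by auto
  then obtain x where x: "x \<in> W' (i - 1)" "x \<in> W j" "x \<notin> W (j - 1)" using ne by blast
  have "W' (i - 1) \<subseteq> W' i" using W'_mono i by auto
  hence "x \<in> W' i \<inter> W j" "x \<notin> W' i \<inter> W (j - 1)" using x by auto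
  thus "j \<in> relX N W W' i" using j1 unfolding relX_def by blast
qed

lemma relX_card: assumes i: "i \<le> N" shows "card (relX N W W' i) = i"
proof -
  define f where "f j = dim (W' i \<inter> W j)" for j
  have sub: "j \<le> N \<Longrightarrow> subspace (W' i \<inter> W j)" for j
    using W_sub[of j] W'_sub[OF i] by (rule_tac subspace_inter) 
  have step: "f j = f (j - 1) + (if j \<in> relX N W W' i then 1 else 0)" if j: "1 \<le> j" "j \<le> N" for j
  proof -
    have WW: "W (j - 1) \<subseteq> W j" using W_mono j by auto
    have le: "f j \<le> f (j - 1) + 1"
    proof -
      let ?S = "W' i \<inter> W j" and ?T = "W (j - 1)"
      have "dim {x + y |x y. x \<in> ?S \<and> y \<in> ?T} + dim (?S \<inter> ?T) = dim ?S + dim ?T"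
        by (rule fd.dim_sums_Int[OF sub[OF j(2)] W_sub]) (use j in simp)
      moreover have sumsub: "{x + y |x y. x \<in> ?S \<and> y \<in> ?T} \<subseteq> W j"
      proof
        fix z assume "z \<in> {x + y |x y. x \<in> ?S \<and> y \<in> ?T}"
        then obtain x y where "z = x + y" "x \<in> W j" "y \<in> W j" using WW by blast
        thus "z \<in> W j" using subspace_add[OF W_sub[OF j(2)]] by simp
      qed
      moreover have "dim {x + y |x y. x \<in> ?S \<and> y \<in> ?T} \<le> j" using fd.dim_subset[OF sumsub] W_dim[OF j(2)] by simp
      moreover have "?S \<inter> ?T = W' i \<inter> W (j - 1)" using WW by auto
      moreover have "dim ?T = j - 1" using W_dim j by simp
      ultimately have "dim {x + y |x y. x \<in> ?S \<and> y \<in> ?T} + dim (W' i \<inter> W (j - 1)) = dim ?S + (j - 1)" 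
        by simp
      thus ?thesis unfolding f_def using \<open>dim {x + y |x y. x \<in> ?S \<and> y \<in> ?T} \<le> j\<close> j by linarith
    qed
    show ?thesis
    proof (cases "j \<in> relX N W W' i")
      case True
      hence ne: "W' i \<inter> W j \<noteq> W' i \<inter> W (j - 1)" unfolding relX_def by auto
      have ps: "W' i \<inter> W (j - 1) \<subset> W' i \<inter> W j" using ne WW by blast
      have e1: "span (W' i \<inter> W (j - 1)) = W' i \<inter> W (j - 1)" using sub[of "j - 1"] j by simp
      have e2: "span (W' i \<inter> W j) = W' i \<inter> W j" using sub[OF j(2)] by simp
      have "span (W' i \<inter> W (j - 1)) \<subset> span (W' i \<inter> W j)" unfolding e1 e2 by (rule ps)
      hence "f (j - 1) < f j" unfolding f_def using fd.dim_psubset by blast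
      thus ?thesis using le True by simp
    next
      case False
      hence "W' i \<inter> W j = W' i \<inter> W (j - 1)" using j unfolding relX_def by auto
      thus ?thesis using False unfolding f_def by simp
    qed
  qed
  have cnt: "J \<le> N \<Longrightarrow> f J = card (relX N W W' i \<inter> {1..J})" for J
  proof (induction J)
    case 0
    have "dim (W' i \<inter> W 0) = 0" using W_0 by simp
    thus ?case unfolding f_def by simp
  next
    case (Suc J)
    have fin: "finite (relX N W W' i \<inter> {1..J})" by simp
    show ?case
    proof (cases "Suc J \<in> relX N W W' i")
      case True
      have e: "relX N W W' i \<inter> {Suc 0..Suc J} = insert (Suc J) (relX N W W' i \<inter> {Suc 0..J})"
        using True by (auto simp: le_Suc_eq)
      show ?thesis using step[of "Suc J"] Suc True fin by (simp add: e)
    next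
      case False
      have e: "relX N W W' i \<inter> {Suc 0..Suc J} = relX N W W' i \<inter> {Suc 0..J}"
        using False by (auto simp: le_Suc_eq)
      show ?thesis using step[of "Suc J"] Suc False by (simp add: e)
    qed
  qed
  have "f N = i" unfolding f_def using W_N W'_dim i by simp
  thus ?thesis using cnt[of N] relX_sub by (simp add: Int_absorb2)
qed

end

context ctx begin
lemma relpos_in: assumes i: "1 \<le> i" "i \<le> N"
  shows "relpos N W W' i \<in> relX N W W' i"
proof -
  let ?X = "relX N W W' i" and ?Y = "relX N W W' (i - 1)"
  have fin: "finite ?Y" using relX_sub finite_subset by blast
  have "card (?X - ?Y) = card ?X - card ?Y" using relX_mono[OF i] fin by (simp add: card_Diff_subset)
  hence "card (?X - ?Y) = 1" using relX_card i by simp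
  then obtain j where j: "?X - ?Y = {j}" using card_1_singletonE by blast
  have "relpos N W W' i = j" unfolding relpos_def
    by (rule the_equality) (use j in blast)+
  thus ?thesis using j by blast
qed

lemma X_elem: assumes i: "1 \<le> i" "i \<le> N"
  shows "\<exists>x\<in>W i. g x \<in> W (wperm p N i) \<and> g x \<notin> W (wperm p N i - 1)"
proof -
  have j: "wperm p N i \<in> relX N W W' i" using relpos_in[OF i] relpos i by auto
  let ?j = "wperm p N i"
  have j1: "?j \<in> {1..N}" and ne: "W' i \<inter> W ?j \<noteq> W' i \<inter> W (?j - 1)" using j unfolding relX_def by auto
  have "W (?j - 1) \<subseteq> W ?j" using W_mono j1 by auto
  then obtain y where y: "y \<in> W' i" "y \<in> W ?j" "y \<notin> W (?j - 1)" using ne by blast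
  obtain x where "x \<in> W i" "y = g x" using y(1) gW i by auto
  thus ?thesis using y by blast
qed

end

context ctx begin
lemma wblock_unique:
  assumes r: "1 \<le> r" "r \<le> sig" and ir: "plt p r < i" "i \<le> ple p r"
    and r': "r' \<in> {1..sig}" "i \<in> wblock p N r'"
  shows "r' = r"
proof -
  have "i \<le> nn" using ir ple_le[of r] by simp
  moreover have "ple p r' \<le> nn" by (rule ple_le)
  ultimately have "i \<notin> {N - ple p r' <.. N - plt p r'}" by auto
  hence i': "plt p r' < i" "i \<le> ple p r'" using r' unfolding wblock_def by auto
  show ?thesis
  proof (rule ccontr)
    assume "r' \<noteq> r"
    hence "r' < r \<or> r < r'" by auto
    thus False
    proof
      assume "r' < r"
      hence "ple p r' \<le> plt p r" unfolding ple_def plt_def by (intro sum_take_mono) simp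
      thus False using i' ir by simp
    next
      assume "r < r'"
      hence "ple p r \<le> plt p r'" unfolding ple_def plt_def by (intro sum_take_mono) simp
      thus False using i' ir by simp
    qed
  qed
qed

lemma wperm_block:
  assumes r: "1 \<le> r" "r \<le> sig" and ir: "plt p r < i" "i \<le> ple p r"
  shows "wperm p N i = wcyc p N r i"
proof -
  have inb: "i \<in> wblock p N r" using ir unfolding wblock_def by auto
  have te: "(THE r'. r' \<in> {1..sig} \<and> i \<in> wblock p N r') = r"
  proof (rule the_equality)
    show "r \<in> {1..sig} \<and> i \<in> wblock p N r" using r inb by simp
    fix r' assume "r' \<in> {1..sig} \<and> i \<in> wblock p N r'"
    thus "r' = r" using wblock_unique[OF r ir] by blast
  qed
  have ex: "\<exists>r'\<in>{1..sig}. i \<in> wblock p N r'" using r inb by auto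
  show ?thesis unfolding wperm_def using ex te by (simp only: if_True)
qed

lemma wperm1:
  assumes r: "1 \<le> r" "r \<le> sig" and k: "1 \<le> k" "k < P r"
  shows "wperm p N (plt p r + k) = plt p r + k + 1"
proof -
  have e: "ple p r = plt p r + P r" using ple_eq r by simp
  have "wperm p N (plt p r + k) = wcyc p N r (plt p r + k)"
    by (rule wperm_block) (use r k e in auto)
  moreover have c: "(plt p r < plt p r + k \<and> plt p r + k < ple p r) = True" using k e by simp
  ultimately show ?thesis unfolding wcyc_def c if_True by simp
qed

lemma wperm2:
  assumes r: "1 \<le> r" "r \<le> sig"
  shows "wperm p N (ple p r) = N - plt p r"
proof -
  have e: "ple p r = plt p r + P r" using ple_eq r by simp
  have "wperm p N (ple p r) = wcyc p N r (ple p r)"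
    by (rule wperm_block) (use r e P_pos[OF r] in auto)
  moreover have c: "(plt p r < ple p r \<and> ple p r < ple p r) = False" by simp
  ultimately show ?thesis unfolding wcyc_def c if_False by simp
qed

end

context ctx begin

lemma span_image_repr:
  assumes "finite I" "x \<in> span (h ` I)"
  shows "\<exists>c. x = (\<Sum>j\<in>I. c j *s h j)"
  using assms
proof (induction I arbitrary: x rule: finite_induct)
  case empty thus ?case by simp
next
  case (insert a I)
  have "x \<in> span (insert (h a) (h ` I))" using insert.prems by simp
  then obtain k where k: "x - k *s h a \<in> span (h ` I)" using span_breakdown_eq by blast
  obtain c where c: "x - k *s h a = (\<Sum>j\<in>I. c j *s h j)" using insert.IH[OF k] by blast
  have "(\<Sum>j\<in>insert a I. (c(a := k)) j *s h j) = k *s h a + (\<Sum>j\<in>I. c j *s h j)"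
    using insert.hyps by (simp add: sum.insert_if) (rule sum.cong, auto)
  also have "\<dots> = x" using c by (simp add: algebra_simps)
  finally show ?case by metis
qed

lemma tri_a:
  fixes f h :: "'i \<Rightarrow> 'v" and \<rho> :: "'i \<Rightarrow> nat"
  assumes I: "finite I" and inj: "inj_on \<rho> I"
    and diag: "\<And>i. i \<in> I \<Longrightarrow> B (f i) (h i) \<noteq> 0"
    and tri: "\<And>i j. i \<in> I \<Longrightarrow> j \<in> I \<Longrightarrow> \<rho> j < \<rho> i \<Longrightarrow> B (f i) (h j) = 0"
    and x: "x \<in> span (h ` I)" and orth: "\<And>i. i \<in> I \<Longrightarrow> B (f i) x = 0"
  shows "x = 0"
proof -
  obtain c where c: "x = (\<Sum>j\<in>I. c j *s h j)" using span_image_repr[OF I x] by blast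
  have z: "\<forall>j\<in>I. c j = 0"
  proof (rule ccontr)
    assume "\<not> (\<forall>j\<in>I. c j = 0)"
    hence J: "{j\<in>I. c j \<noteq> 0} \<noteq> {}" by auto
    have Jf: "finite {j\<in>I. c j \<noteq> 0}" using I by simp
    have "Max (\<rho> ` {j\<in>I. c j \<noteq> 0}) \<in> \<rho> ` {j\<in>I. c j \<noteq> 0}"
      using J Jf by (intro Max_in) auto
    then obtain i where i: "i \<in> {j\<in>I. c j \<noteq> 0}" "\<rho> i = Max (\<rho> ` {j\<in>I. c j \<noteq> 0})"
      by (metis (no_types, lifting) imageE)
    have mx: "\<And>j. j \<in> I \<Longrightarrow> c j \<noteq> 0 \<Longrightarrow> \<rho> j \<le> \<rho> i" using i(2) Jf by simp
    have "B (f i) x = (\<Sum>j\<in>I. c j * B (f i) (h j))" unfolding c by (simp add: B_sum2 B_scale2)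
    also have "\<dots> = c i * B (f i) (h i) + (\<Sum>j\<in>I - {i}. c j * B (f i) (h j))"
      using i(1) I by (intro sum.remove) auto
    also have "(\<Sum>j\<in>I - {i}. c j * B (f i) (h j)) = 0"
    proof (rule sum.neutral, rule ballI)
      fix j assume j: "j \<in> I - {i}"
      show "c j * B (f i) (h j) = 0"
      proof (cases "c j = 0")
        case False
        hence "\<rho> j \<le> \<rho> i" using mx j by simp
        moreover have "\<rho> j \<noteq> \<rho> i" using inj j i(1) unfolding inj_on_def by blast
        ultimately have "B (f i) (h j) = 0" using tri[of i j] j i(1) by simp
        thus ?thesis by simp
      qed simp
    qed
    finally have "B (f i) x = c i * B (f i) (h i)" by simp
    moreover have "c i * B (f i) (h i) \<noteq> 0" using i(1) diag by simp
    ultimately show False using orth i(1) by simp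
  qed
  thus ?thesis unfolding c by simp
qed

lemma tri_b:
  fixes f h :: "'i \<Rightarrow> 'v" and \<rho> :: "'i \<Rightarrow> nat"
  assumes I: "finite I" and inj: "inj_on \<rho> I"
    and diag: "\<And>i. i \<in> I \<Longrightarrow> B (f i) (h i) \<noteq> 0"
    and tri: "\<And>i j. i \<in> I \<Longrightarrow> j \<in> I \<Longrightarrow> \<rho> j < \<rho> i \<Longrightarrow> B (f i) (h j) = 0"
    and x: "x \<in> span (f ` I)" and orth: "\<And>j. j \<in> I \<Longrightarrow> B x (h j) = 0"
  shows "x = 0"
proof -
  obtain c where c: "x = (\<Sum>j\<in>I. c j *s f j)" using span_image_repr[OF I x] by blast
  have z: "\<forall>j\<in>I. c j = 0"
  proof (rule ccontr)
    assume "\<not> (\<forall>j\<in>I. c j = 0)"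
    hence J: "{j\<in>I. c j \<noteq> 0} \<noteq> {}" by auto
    have Jf: "finite {j\<in>I. c j \<noteq> 0}" using I by simp
    have "Min (\<rho> ` {j\<in>I. c j \<noteq> 0}) \<in> \<rho> ` {j\<in>I. c j \<noteq> 0}"
      using J Jf by (intro Min_in) auto
    then obtain i where i: "i \<in> {j\<in>I. c j \<noteq> 0}" "\<rho> i = Min (\<rho> ` {j\<in>I. c j \<noteq> 0})"
      by (metis (no_types, lifting) imageE)
    have mn: "\<And>j. j \<in> I \<Longrightarrow> c j \<noteq> 0 \<Longrightarrow> \<rho> i \<le> \<rho> j" using i(2) Jf by simp
    have "B x (h i) = (\<Sum>j\<in>I. c j * B (f j) (h i))" unfolding c by (simp add: B_sum1 B_scale1)
    also have "\<dots> = c i * B (f i) (h i) + (\<Sum>j\<in>I - {i}. c j * B (f j) (h i))"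
      using i(1) I by (intro sum.remove) auto
    also have "(\<Sum>j\<in>I - {i}. c j * B (f j) (h i)) = 0"
    proof (rule sum.neutral, rule ballI)
      fix j assume j: "j \<in> I - {i}"
      show "c j * B (f j) (h i) = 0"
      proof (cases "c j = 0")
        case False
        hence "\<rho> i \<le> \<rho> j" using mn j by simp
        moreover have "\<rho> j \<noteq> \<rho> i" using inj j i(1) unfolding inj_on_def by blast
        ultimately have "B (f j) (h i) = 0" using tri[of j i] j i(1) by simp
        thus ?thesis by simp
      qed simp
    qed
    finally have "B x (h i) = c i * B (f i) (h i)" by simp
    moreover have "c i * B (f i) (h i) \<noteq> 0" using i(1) diag by simp
    ultimately show False using orth i(1) by simp
  qed
  thus ?thesis unfolding c by simp
qed

lemma perp_sub: "subspace (perp B S)"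
  unfolding subspace_def perp_def by (auto simp: B_add1 B_scale1)

lemma perp_anti: "S \<subseteq> T \<Longrightarrow> perp B T \<subseteq> perp B S"
  unfolding perp_def by auto

lemma perp_span: "perp B (span S) = perp B S"
proof
  show "perp B (span S) \<subseteq> perp B S" using perp_anti[OF span_superset] .
  show "perp B S \<subseteq> perp B (span S)"
  proof
    fix x assume x: "x \<in> perp B S"
    have "subspace {y. B x y = 0}" unfolding subspace_def by (auto simp: B_add2 B_scale2)
    moreover have "S \<subseteq> {y. B x y = 0}" using x unfolding perp_def by auto
    ultimately have "span S \<subseteq> {y. B x y = 0}" by (rule span_minimal[rotated])
    thus "x \<in> perp B (span S)" unfolding perp_def by auto
  qed
qed

lemma hyper: assumes U: "subspace U" shows "dim U \<le> dim (U \<inter> {x. B x a = 0}) + 1"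
proof (cases "U \<subseteq> {x. B x a = 0}")
  case True thus ?thesis by (simp add: Int_absorb2)
next
  case False
  then obtain e where e: "e \<in> U" "B e a \<noteq> 0" by auto
  have "U \<subseteq> span (insert e (U \<inter> {x. B x a = 0}))"
  proof
    fix x assume x: "x \<in> U"
    let ?c = "B x a / B e a"
    have "x - ?c *s e \<in> U" using x e U by (simp add: subspace_diff subspace_scale)
    moreover have "B (x - ?c *s e) a = 0" using e by (simp add: B_diff1 B_scale1)
    ultimately have "x - ?c *s e \<in> span (U \<inter> {x. B x a = 0})" by (simp add: span_base)
    thus "x \<in> span (insert e (U \<inter> {x. B x a = 0}))" using span_breakdown_eq by blast
  qed
  hence "dim U \<le> dim (insert e (U \<inter> {x. B x a = 0}))" by (rule fd.dim_mono)
  also have "\<dots> \<le> dim (U \<inter> {x. B x a = 0}) + 1" by (simp add: fd.dim_insert)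
  finally show ?thesis .
qed

lemma perp_card: "finite T \<Longrightarrow> N \<le> dim (perp B T) + card T"
proof (induction T rule: finite_induct)
  case empty
  have "perp B {} = UNIV" unfolding perp_def by auto
  thus ?case using dimV by simp
next
  case (insert a T)
  have e: "perp B (insert a T) = perp B T \<inter> {x. B x a = 0}" unfolding perp_def by auto
  have "dim (perp B T) \<le> dim (perp B (insert a T)) + 1" unfolding e by (rule hyper[OF perp_sub])
  thus ?case using insert by simp
qed

lemma perp_dim: "N \<le> dim (perp B S) + dim S"
proof -
  obtain T where T: "T \<subseteq> span S" "independent T" "span S \<subseteq> span T" "card T = dim (span S)"
    using basis_exists[of "span S"] by blast
  have fT: "finite T" using T(2) fd.finiteI_independent by blast
  have "span T = span S" using T by (metis span_eq span_span)
  hence "perp B T = perp B S" by (metis perp_span)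
  thus ?thesis using perp_card[OF fT] T(4) by simp
qed

lemma dim_sum_disj:
  assumes "subspace U" "subspace V" "U \<inter> V = {0}"
  shows "dim {x + y |x y. x \<in> U \<and> y \<in> V} = dim U + dim V"
  using fd.dim_sums_Int[OF assms(1,2)] assms(3) by simp

lemma direct_sum_dim:
  assumes U: "subspace U" and V: "subspace V" and I: "U \<inter> V = {0}" and d: "N \<le> dim U + dim V"
  shows "direct_sum_UNIV U V"
proof -
  let ?S = "{x + y |x y. x \<in> U \<and> y \<in> V}"
  have sS: "subspace ?S" using subspace_sums[OF U V] .
  have "dim ?S = N" using dim_sum_disj[OF U V I] d dim_le_N[of ?S] by simp
  hence "span ?S = UNIV" using span_eq_UNIV_iff by simp
  moreover have "span ?S = ?S" using sS by (simp only: span_eq_iff)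
  ultimately have "?S = UNIV" by simp
  thus ?thesis unfolding direct_sum_UNIV_def using I by blast
qed

end

context ctx begin

definition body :: "nat \<Rightarrow> (nat \<Rightarrow> 'v) \<Rightarrow> bool" where
 "body r v \<longleftrightarrow>
  (\<forall>i\<le>P r. W (plt p r + i) =
     span ((\<Union>t\<in>{1..<r}. span ((\<lambda>j. gpow g (int j) (v t)) ` {..<P t})) \<union> (\<lambda>j. gpow g (int j) (v r)) ` {..<i})) \<and>
  (\<forall>t\<in>{1..<r}. \<forall>i\<in>{- int (P t) .. int (P t) - 1}. B (gpow g i (v t)) (v r) = 0) \<and>
  (\<forall>i\<in>{- int (P r) + 1 .. int (P r) - 1}. B (v r) (gpow g i (v r)) = 0) \<and>
  Q (v r) = 0 \<and> B (v r) (gpow g (int (P r)) (v r)) = 1 \<and>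
  indep_family scale (\<lambda>(t, i). gpow g (- int (P t) + int i) (v t)) (SIGMA t:{1..r}. {..<2 * P t}) \<and>
  direct_sum_UNIV (W (ple p r))
     (perp B (span ((\<lambda>(t, i). gpow g (- int (P t) + int i) (v t)) ` (SIGMA t:{1..r}. {..<P t}))))"

lemma props_body: "props_i_v scale B Q g W p v \<longleftrightarrow> (\<forall>r\<in>{1..sig}. body r v)"
  unfolding props_i_v_def body_def P_def by (rule refl)

definition Aset :: "(nat \<Rightarrow> 'v) \<Rightarrow> nat \<Rightarrow> 'v set" where
  "Aset v r = (\<lambda>(t, j). gpow g (int j) (v t)) ` (SIGMA t:{1..<r}. {..<P t})"
definition Zs :: "'v \<Rightarrow> nat \<Rightarrow> 'v set" where
  "Zs x k = (\<lambda>j. gpow g (int j) x) ` {..<k}"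
definition Cset :: "(nat \<Rightarrow> 'v) \<Rightarrow> nat \<Rightarrow> 'v set" where
  "Cset v r = (\<lambda>(t, i). gpow g (- int (P t) + int i) (v t)) ` (SIGMA t:{1..r}. {..<P t})"
definition Fset :: "(nat \<Rightarrow> 'v) \<Rightarrow> nat \<Rightarrow> 'v set" where
  "Fset v r = (\<lambda>(t, i). gpow g (- int (P t) + int i) (v t)) ` (SIGMA t:{1..r}. {..<2 * P t})"
definition Pset :: "(nat \<Rightarrow> 'v) \<Rightarrow> nat \<Rightarrow> 'v set" where
  "Pset v r = (\<lambda>t. gpow g (int (P t)) (v t)) ` {1..<r}"

lemma Aset_mem: "1 \<le> t \<Longrightarrow> t < r \<Longrightarrow> j < P t \<Longrightarrow> gpow g (int j) (v t) \<in> Aset v r"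
  unfolding Aset_def by (rule image_eqI[of _ _ "(t, j)"]) auto

lemma Aset_cases: "y \<in> Aset v r \<Longrightarrow> \<exists>t j. 1 \<le> t \<and> t < r \<and> j < P t \<and> y = gpow g (int j) (v t)"
  unfolding Aset_def by auto

lemma Aset_Suc: "Aset v (Suc r) = Aset v r \<union> (if r = 0 then {} else Zs (v r) (P r))"
proof -
  have "(SIGMA t:{1..<Suc r}. {..<P t}) = (SIGMA t:{1..<r}. {..<P t}) \<union> (if r = 0 then {} else {r} \<times> {..<P r})"
    by (auto simp: less_Suc_eq)
  thus ?thesis unfolding Aset_def Zs_def by auto
qed

lemma Zs_Suc: "Zs x (Suc k) = insert (gpow g (int k) x) (Zs x k)"
  unfolding Zs_def by (simp add: lessThan_Suc)

lemma Zs_0[simp]: "Zs x 0 = {}" unfolding Zs_def by simp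

lemma span_Un_spans: "span ((\<Union>t\<in>T. span (Z t)) \<union> Y) = span ((\<Union>t\<in>T. Z t) \<union> Y)"
proof -
  have a: "(\<Union>t\<in>T. Z t) \<union> Y \<subseteq> span ((\<Union>t\<in>T. span (Z t)) \<union> Y)"
    using span_superset[of "(\<Union>t\<in>T. span (Z t)) \<union> Y"] span_superset[of "Z _"] by blast
  have b: "(\<Union>t\<in>T. span (Z t)) \<union> Y \<subseteq> span ((\<Union>t\<in>T. Z t) \<union> Y)"
  proof -
    have "span (Z t) \<subseteq> span ((\<Union>t\<in>T. Z t) \<union> Y)" if "t \<in> T" for t
      using that by (intro span_mono) auto
    thus ?thesis using span_superset[of "(\<Union>t\<in>T. Z t) \<union> Y"] by blast
  qed
  show ?thesis using a b by (simp add: span_eq)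
qed

lemma Aset_Union: "Aset v r = (\<Union>t\<in>{1..<r}. Zs (v t) (P t))"
  unfolding Aset_def Zs_def by auto

lemma body_i: "body r v \<Longrightarrow> i \<le> P r \<Longrightarrow> W (plt p r + i) = span (Aset v r \<union> Zs (v r) i)"
  unfolding body_def Aset_Union Zs_def using span_Un_spans by auto

end

context ctx begin

lemma gp_B_shift2: "B x (gpow g i y) = B (gpow g (- i) x) y"
  using gp_B_shift[of "-i" x y] by simp

lemma ext_lemma:
  assumes j: "Suc j \<le> N" and S: "W j = span S" and y: "y \<in> W (Suc j)" "y \<notin> W j"
  shows "W (Suc j) = span (insert y S)"
proof -
  have WW: "W j \<subseteq> W (Suc j)" using W_mono j by simp
  have sub: "span (insert y S) \<subseteq> W (Suc j)"
    using y(1) WW S span_superset[of S] W_sub[OF j] by (intro span_minimal) auto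
  have "dim (span (insert y S)) = dim S + 1" using y(2) S by (simp add: fd.dim_insert)
  also have "dim S = j" using S W_dim[of j] j by (metis Suc_leD dim_span)
  finally have "dim (W (Suc j)) \<le> dim (span (insert y S))" using W_dim[OF j] by simp
  thus ?thesis using fd.subspace_dim_equal[OF subspace_span W_sub[OF j] sub] by simp
qed

context
  fixes r :: nat and v :: "nat \<Rightarrow> 'v"
  assumes r: "1 \<le> r" "r \<le> sig" and good: "\<forall>r'\<in>{1..<r}. body r' v"
begin

abbreviation "s \<equiv> plt p r"

lemma bd: "t \<in> {1..<r} \<Longrightarrow> body t v" using good by blast

lemma s_le: "s + P r \<le> nn" using ple_eq[OF r] ple_le[of r] by simp

lemma orth_ii: "1 \<le> t' \<Longrightarrow> t' < t \<Longrightarrow> t < r \<Longrightarrow> - int (P t') \<le> i \<Longrightarrow> i \<le> int (P t') - 1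
   \<Longrightarrow> B (gpow g i (v t')) (v t) = 0"
  using bd[of t] unfolding body_def by auto

lemma iii1: "1 \<le> t \<Longrightarrow> t < r \<Longrightarrow> B (v t) (gpow g (int (P t)) (v t)) = 1"
  using bd[of t] unfolding body_def by auto

lemma iii0: "1 \<le> t \<Longrightarrow> t < r \<Longrightarrow> - int (P t) + 1 \<le> i \<Longrightarrow> i \<le> int (P t) - 1 \<Longrightarrow> B (v t) (gpow g i (v t)) = 0"
  using bd[of t] unfolding body_def by auto

lemma WsA: "W s = span (Aset v r)"
proof (cases "r = 1")
  case True
  have "Aset v 1 = {}" unfolding Aset_def by auto
  thus ?thesis using True W_0 by (simp add: plt_def)
next
  case False
  hence r1: "1 \<le> r - 1" "r - 1 \<le> sig" using r by auto
  have b: "body (r - 1) v" using bd False r by simp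
  have "W (plt p (r - 1) + P (r - 1)) = span (Aset v (r - 1) \<union> Zs (v (r - 1)) (P (r - 1)))"
    using body_i[OF b] by simp
  moreover have "plt p (r - 1) + P (r - 1) = s" using ple_eq[OF r1] plt_Suc[of "r - 1"] r by simp
  moreover have "Aset v (r - 1) \<union> Zs (v (r - 1)) (P (r - 1)) = Aset v r"
    using Aset_Suc[of v "r - 1"] False r by simp
  ultimately show ?thesis by simp
qed

lemma dsum: "direct_sum_UNIV (W s) (perp B (span (Cset v (r - 1))))"
proof (cases "r = 1")
  case True
  have "Cset v 0 = {}" unfolding Cset_def by auto
  moreover have "perp B {0} = UNIV" unfolding perp_def by simp
  ultimately show ?thesis using True W_0 by (simp add: plt_def direct_sum_UNIV_def)
next
  case False
  hence r1: "1 \<le> r - 1" "r - 1 \<le> sig" using r by auto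
  have b: "body (r - 1) v" using bd False r by simp
  have "ple p (r - 1) = s" using plt_Suc[of "r - 1"] r by simp
  thus ?thesis using b unfolding body_def Cset_def by simp
qed

lemma Aset_W: "Aset v r \<subseteq> W s" using WsA span_superset by blast

lemma vt_W: "1 \<le> t \<Longrightarrow> t < r \<Longrightarrow> v t \<in> W s"
  using Aset_mem[of t r 0 v] P_pos[of t] r Aset_W by auto

lemma W_s_nn: "k \<le> P r \<Longrightarrow> W (s + k) \<subseteq> W nn" using W_le_nn s_le by simp

lemma vt_nn: "1 \<le> t \<Longrightarrow> t < r \<Longrightarrow> v t \<in> W nn" using vt_W W_s_nn[of 0] by auto

lemma P_ge: "1 \<le> t \<Longrightarrow> t < r \<Longrightarrow> P r \<le> P t" using P_anti r by simp

lemma pi_zero: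
  assumes pi: "\<pi> \<in> span (Pset v r)" and o: "\<And>t. 1 \<le> t \<Longrightarrow> t < r \<Longrightarrow> B (v t) \<pi> = 0"
  shows "\<pi> = 0"
proof (rule tri_a[where I="{1..<r}" and f=v and h="\<lambda>t. gpow g (int (P t)) (v t)" and \<rho>="\<lambda>t. r - t"])
  show "finite {1..<r}" by simp
  show "inj_on (\<lambda>t. r - t) {1..<r}" by (rule inj_onI) auto
  show "B (v i) (gpow g (int (P i)) (v i)) \<noteq> 0" if "i \<in> {1..<r}" for i using iii1 that by simp
  show "B (v i) (gpow g (int (P j)) (v j)) = 0" if "i \<in> {1..<r}" "j \<in> {1..<r}" "r - j < r - i" for i j
  proof -
    have ij: "i < j" using that by auto
    have "P j \<le> P i" using P_anti[of i j] that r by auto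
    hence "B (gpow g (- int (P j)) (v i)) (v j) = 0" using orth_ii[of i j "- int (P j)"] ij that P_pos[of i] r by auto
    thus ?thesis using gp_B_shift2 by simp
  qed
  show "\<pi> \<in> span ((\<lambda>t. gpow g (int (P t)) (v t)) ` {1..<r})" using pi unfolding Pset_def .
  show "B (v i) \<pi> = 0" if "i \<in> {1..<r}" for i using o that by simp
qed


context
  fixes x :: 'v
  assumes x: "x \<in> W (s + 1)" "x \<notin> W s"
    and xorth: "\<forall>t\<in>{1..<r}. \<forall>i\<in>{- int (P t) .. int (P t) - 1}. B (gpow g i (v t)) x = 0"
begin

lemma vt_x: "1 \<le> t \<Longrightarrow> t < r \<Longrightarrow> 1 \<le> k \<Longrightarrow> k \<le> P r \<Longrightarrow> B (v t) (gpow g (int k) x) = 0"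
proof -
  assume t: "1 \<le> t" "t < r" and k: "1 \<le> k" "k \<le> P r"
  have "P r \<le> P t" using P_ge t by simp
  hence "B (gpow g (- int k) (v t)) x = 0" using xorth t k by auto
  thus ?thesis using gp_B_shift2 by simp
qed

lemma g_gp: "g (gpow g (int j) y) = gpow g (int (Suc j)) y"
  unfolding of_nat_Suc[of j] by (metis add.commute gp_succ)

lemma incl: "1 \<le> k \<Longrightarrow> g ` (Aset v r \<union> Zs x (k - 1)) \<subseteq> Aset v r \<union> Zs x k \<union> Pset v r"
proof
  fix y assume k: "1 \<le> k" and "y \<in> g ` (Aset v r \<union> Zs x (k - 1))"
  then obtain y' where y': "y = g y'" "y' \<in> Aset v r \<union> Zs x (k - 1)" by blast
  show "y \<in> Aset v r \<union> Zs x k \<union> Pset v r"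
  proof (cases "y' \<in> Aset v r")
    case True
    then obtain t j where tj: "1 \<le> t" "t < r" "j < P t" "y' = gpow g (int j) (v t)" using Aset_cases by blast
    have yy: "y = gpow g (int (Suc j)) (v t)" using tj y' g_gp by simp
    show ?thesis
    proof (cases "Suc j < P t")
      case True thus ?thesis using Aset_mem[OF tj(1,2) True] yy by simp
    next
      case False
      hence "Suc j = P t" using tj by simp
      hence "y \<in> Pset v r" unfolding Pset_def using yy tj by auto
      thus ?thesis by simp
    qed
  next
    case False
    hence "y' \<in> Zs x (k - 1)" using y' by simp
    then obtain j where j: "j < k - 1" "y' = gpow g (int j) x" unfolding Zs_def by auto
    have "y = gpow g (int (Suc j)) x" using j y' g_gp by simp
    moreover have "Suc j < k" using j by simp
    ultimately have "y \<in> Zs x k" unfolding Zs_def by (intro image_eqI[of _ _ "Suc j"]) auto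
    thus ?thesis by simp
  qed
qed

lemma gstep:
  assumes k: "1 \<le> k" "k \<le> P r" and e1: "W (s + k) = span (Aset v r \<union> Zs x k)"
    and e0: "W (s + (k - 1)) = span (Aset v r \<union> Zs x (k - 1))"
    and z: "z \<in> W (s + k)" and o: "\<And>t. 1 \<le> t \<Longrightarrow> t < r \<Longrightarrow> B (v t) (g z) = 0"
  shows "\<exists>z0\<in>W (s + k). \<exists>l. g z = z0 + l *s gpow g (int k) x"
proof -
  let ?w = "gpow g (int (k - 1)) x"
  have Zk: "Zs x k = insert ?w (Zs x (k - 1))" using Zs_Suc[of x "k - 1"] k by simp
  have "z \<in> span (insert ?w (Aset v r \<union> Zs x (k - 1)))" using z e1 Zk by simp
  then obtain l where l: "z - l *s ?w \<in> span (Aset v r \<union> Zs x (k - 1))" using span_breakdown_eq by blast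
  let ?y0 = "z - l *s ?w"
  have "g ?y0 \<in> span (g ` (Aset v r \<union> Zs x (k - 1)))" using l g_span by blast
  also have "\<dots> \<subseteq> span ((Aset v r \<union> Zs x k) \<union> Pset v r)" using incl[OF k(1)] by (intro span_mono) auto
  finally obtain a \<pi> where a: "g ?y0 = a + \<pi>" "a \<in> span (Aset v r \<union> Zs x k)" "\<pi> \<in> span (Pset v r)"
    unfolding span_Un by blast
  have gw: "g ?w = gpow g (int k) x" using g_gp[of "k - 1" x] k by simp
  have lin: "g (u + c *s w) = g u + c *s g w" for u w c
    using g_lin unfolding Vector_Spaces.linear_iff by simp
  have "z = ?y0 + l *s ?w" by simp
  hence gz: "g z = a + \<pi> + l *s gpow g (int k) x" using a(1) lin[of ?y0 l ?w] gw by simp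
  have aW: "a \<in> W (s + k)" using a(2) e1 by simp
  have "\<pi> = 0"
  proof (rule pi_zero[OF a(3)])
    fix t assume t: "1 \<le> t" "t < r"
    have "B (v t) a = 0" using W_iso[OF vt_nn[OF t]] W_s_nn[OF k(2)] aW by auto
    moreover have "B (v t) (gpow g (int k) x) = 0" using vt_x t k by simp
    moreover have "B (v t) (g z) = 0" using o t by simp
    ultimately show "B (v t) \<pi> = 0" using gz by (simp add: B_add2 B_scale2)
  qed
  thus ?thesis using gz aW by auto
qed

lemma blockW: "k \<le> P r \<Longrightarrow> W (s + k) = span (Aset v r \<union> Zs x k)"
proof (induction k rule: less_induct)
  case (less k)
  show ?case
  proof (cases "k \<le> 1")
    case True
    show ?thesis
    proof (cases "k = 0")
      case True thus ?thesis using WsA by simp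
    next
      case False
      hence k1: "k = 1" using True by simp
      have sN: "Suc s \<le> N" using s_le P_pos[OF r] by simp
      have "W (Suc s) = span (insert x (Aset v r))" using ext_lemma[OF sN WsA] x by simp
      moreover have "Zs x 1 = {x}" unfolding Zs_def by auto
      ultimately show ?thesis using k1 by simp
    qed
  next
    case False
    define k' where "k' = k - 1"
    have k': "1 \<le> k'" "k' < P r" "k = Suc k'" using False less.prems unfolding k'_def by auto
    have e1: "W (s + k') = span (Aset v r \<union> Zs x k')" using less.IH[of k'] k' by simp
    have e0: "W (s + (k' - 1)) = span (Aset v r \<union> Zs x (k' - 1))" using less.IH[of "k' - 1"] k' by simp
    have iN: "1 \<le> s + k'" "s + k' \<le> N" using k' s_le by auto
    obtain z where z: "z \<in> W (s + k')" "g z \<in> W (s + k' + 1)" "g z \<notin> W (s + k')"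
      using X_elem[OF iN] wperm1[OF r k'(1,2)] by auto
    have o: "B (v t) (g z) = 0" if t: "1 \<le> t" "t < r" for t
      using W_iso[OF vt_nn[OF t]] W_s_nn[of "k' + 1"] z(2) k' by auto
    obtain z0 l where zl: "z0 \<in> W (s + k')" "g z = z0 + l *s gpow g (int k') x"
      using gstep[OF k'(1) _ e1 e0 z(1) o] k' by auto
    have WW: "W (s + k') \<subseteq> W (s + k' + 1)" using W_mono iN s_le k' by simp
    have sub1: "subspace (W (s + k' + 1))" using W_sub s_le k' by simp
    have sub0: "subspace (W (s + k'))" using W_sub iN by simp
    have l0: "l \<noteq> 0" using zl z(3) by auto
    have yeq: "gpow g (int k') x = inverse l *s (g z - z0)" using zl l0 by simp
    have yin: "gpow g (int k') x \<in> W (s + k' + 1)"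
      unfolding yeq using sub1 z(2) WW zl(1) by (intro subspace_scale subspace_diff) auto
    have ynot: "gpow g (int k') x \<notin> W (s + k')"
    proof
      assume "gpow g (int k') x \<in> W (s + k')"
      hence "g z \<in> W (s + k')" using zl sub0 by (simp add: subspace_add subspace_scale)
      thus False using z(3) by simp
    qed
    have "W (Suc (s + k')) = span (insert (gpow g (int k') x) (Aset v r \<union> Zs x k'))"
      using ext_lemma[of "s + k'" "Aset v r \<union> Zs x k'"] e1 yin ynot s_le k' by simp
    thus ?thesis using k' Zs_Suc[of x k'] by simp
  qed
qed

lemma Kne: "B x (gpow g (int (P r)) x) \<noteq> 0"
proof -
  have pr: "1 \<le> P r" using P_pos r by simp
  have iN: "1 \<le> ple p r" "ple p r \<le> N" using ple_eq[OF r] pr ple_le[of r] by auto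
  obtain z where z: "z \<in> W (ple p r)" "g z \<in> W (N - s)" "g z \<notin> W (N - s - 1)"
    using X_elem[OF iN] wperm2[OF r] by auto
  have sn: "s \<le> nn" "s + 1 \<le> nn" using s_le pr by auto
  have gzp: "g z \<in> perp B (W s)" using z(2) W_perp[OF sn(1)] by simp
  have o: "B (v t) (g z) = 0" if t: "1 \<le> t" "t < r" for t
    using gzp vt_W[OF t] B_refl unfolding perp_def by blast
  have eP: "W (s + P r) = span (Aset v r \<union> Zs x (P r))" using blockW by simp
  have eP0: "W (s + (P r - 1)) = span (Aset v r \<union> Zs x (P r - 1))" using blockW by simp
  have zz: "z \<in> W (s + P r)" using z(1) ple_eq[OF r] by simp
  obtain z0 l where zl: "z0 \<in> W (s + P r)" "g z = z0 + l *s gpow g (int (P r)) x"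
    using gstep[OF pr _ eP eP0 zz o] by auto
  have "N - s - 1 = N - (s + 1)" by simp
  hence "g z \<notin> perp B (W (s + 1))" using z(3) W_perp[OF sn(2)] by simp
  then obtain y where y: "y \<in> W (s + 1)" "B (g z) y \<noteq> 0" unfolding perp_def by blast
  have "W (s + 1) = span (Aset v r \<union> Zs x 1)" using blockW[of 1] pr by simp
  moreover have "Zs x 1 = {x}" unfolding Zs_def by auto
  ultimately have "y \<in> span (insert x (Aset v r))" using y(1) by simp
  then obtain m where m: "y - m *s x \<in> span (Aset v r)" using span_breakdown_eq by blast
  have "B (g z) (y - m *s x) = 0" using gzp m WsA unfolding perp_def by simp
  hence "B (g z) y = m * B (g z) x" by (simp add: B_diff2 B_scale2)
  hence Bx: "B (g z) x \<noteq> 0" using y(2) by auto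
  have "B z0 x = 0" using W_iso W_s_nn[of "P r"] W_s_nn[of 1] zl(1) x(1) pr by auto
  hence "B (g z) x = l * B (gpow g (int (P r)) x) x" using zl(2) by (simp add: B_add1 B_scale1)
  hence "B (gpow g (int (P r)) x) x \<noteq> 0" using Bx by auto
  thus ?thesis using B_refl by blast
qed

end
end
end

context ctx begin

lemma sum_P: "r \<le> sig \<Longrightarrow> (\<Sum>t\<in>{1..r}. P t) = ple p r"
proof (induction r)
  case 0 thus ?case by (simp add: ple_def)
next
  case (Suc r)
  have "ple p (Suc r) = plt p (Suc r) + P (Suc r)" using ple_eq[of "Suc r"] Suc.prems by simp
  thus ?case using Suc by (simp add: plt_Suc)
qed

lemma card_I: "r \<le> sig \<Longrightarrow> card (SIGMA t:{1..r}. {..<P t}) = ple p r"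
  using sum_P by (simp add: card_SigmaI)

lemma card_J: "r \<le> sig \<Longrightarrow> card (SIGMA t:{1..r}. {..<2 * P t}) = 2 * ple p r"
  using sum_P by (simp add: card_SigmaI sum_distrib_left[symmetric])

lemma rho_inj:
  "inj_on (\<lambda>(t, i). (P t - i) * (sig + 1) + t) (SIGMA t:{1..sig}. {..<P t})"
proof (rule inj_onI, clarify)
  fix t i t' i' assume a: "t \<in> {1..sig}" "i < P t" "t' \<in> {1..sig}" "i' < P t'"
    and e: "(P t - i) * (sig + 1) + t = (P t' - i') * (sig + 1) + t'"
  have "((P t - i) * (sig + 1) + t) mod (sig + 1) = t" using a by (subst mod_mult_self3) simp
  moreover have "((P t' - i') * (sig + 1) + t') mod (sig + 1) = t'" using a by (subst mod_mult_self3) simp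
  ultimately have tt: "t = t'" using e by simp
  have "((P t - i) * (sig + 1) + t) div (sig + 1) = P t - i" using a by (subst div_mult_self3) simp_all
  moreover have "((P t' - i') * (sig + 1) + t') div (sig + 1) = P t' - i'" using a by (subst div_mult_self3) simp_all
  ultimately have "P t - i = P t' - i'" using e by simp
  thus "t = t' \<and> i = i'" using tt a by simp
qed

lemma rho_less:
  assumes "t \<in> {1..sig}" "t' \<in> {1..sig}"
    and "(P t' - i') * (sig + 1) + t' < (P t - i) * (sig + 1) + t"
  shows "P t' - i' < P t - i \<or> (P t' - i' = P t - i \<and> t' < t)"
proof (rule ccontr)
  assume "\<not> ?thesis"
  hence c: "P t - i < P t' - i' \<or> (P t' - i' = P t - i \<and> t \<le> t')" by auto
  show False
  proof (cases "P t - i < P t' - i'")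
    case True
    hence "(P t - i) * (sig + 1) + sig + 1 \<le> (P t' - i') * (sig + 1)"
      by (metis Suc_eq_plus1 Suc_leI add.assoc mult_Suc mult_le_mono1 add.commute)
    thus False using assms by auto
  next
    case False thus False using c assms by auto
  qed
qed

context
  fixes r :: nat and v :: "nat \<Rightarrow> 'v"
  assumes r: "r \<le> sig"
    and hW: "W (ple p r) = span (Aset v (Suc r))"
    and hii: "\<And>t t' e. 1 \<le> t' \<Longrightarrow> t' < t \<Longrightarrow> t \<le> r \<Longrightarrow> - int (P t') \<le> e \<Longrightarrow> e \<le> int (P t') - 1
               \<Longrightarrow> B (gpow g e (v t')) (v t) = 0"
    and hiii: "\<And>t e. 1 \<le> t \<Longrightarrow> t \<le> r \<Longrightarrow> - int (P t) + 1 \<le> e \<Longrightarrow> e \<le> int (P t) - 1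
               \<Longrightarrow> B (v t) (gpow g e (v t)) = 0"
    and hn: "\<And>t. 1 \<le> t \<Longrightarrow> t \<le> r \<Longrightarrow> B (v t) (gpow g (int (P t)) (v t)) = 1"
begin

abbreviation "II \<equiv> SIGMA t:{1..r}. {..<P t}"
abbreviation "ff \<equiv> (\<lambda>(t, j). gpow g (int j) (v t))"
abbreviation "hh \<equiv> (\<lambda>(t, i). gpow g (- int (P t) + int i) (v t))"
abbreviation "\<rho>\<rho> \<equiv> (\<lambda>(t, i). (P t - i) * (sig + 1) + t)"

lemma ff_I: "ff ` II = Aset v (Suc r)" unfolding Aset_def by (auto simp: less_Suc_eq_le)

lemma Bz:
  assumes t: "1 \<le> t" "t \<le> r" and t': "1 \<le> t'" "t' \<le> r" and e1: "1 \<le> e"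
    and c: "(t = t' \<and> e \<le> int (P t) - 1) \<or> (t < t' \<and> e \<le> int (P t) - 1) \<or> (t' < t \<and> e \<le> int (P t'))"
  shows "B (gpow g e (v t)) (v t') = 0"
proof -
  consider "t = t'" "e \<le> int (P t) - 1" | "t < t'" "e \<le> int (P t) - 1" | "t' < t" "e \<le> int (P t')"
    using c by blast
  thus ?thesis
  proof cases
    case 1
    have "B (v t) (gpow g (- e) (v t)) = 0" using hiii[OF t, of "- e"] 1 e1 by simp
    thus ?thesis using 1 gp_B_shift by simp
  next
    case 2 thus ?thesis using hii[of t t' e] t t' e1 by simp
  next
    case 3
    have "B (gpow g (- e) (v t')) (v t) = 0" using hii[of t' t "- e"] t t' e1 3 by simp
    hence "B (v t) (gpow g (- e) (v t')) = 0" using B_refl by blast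
    thus ?thesis using gp_B_shift by simp
  qed
qed

lemma I_sub: "II \<subseteq> (SIGMA t:{1..sig}. {..<P t})" using r by auto

lemma tri_hyps:
  shows "finite II" "inj_on \<rho>\<rho> II"
    "\<And>i. i \<in> II \<Longrightarrow> B (ff i) (hh i) \<noteq> 0"
    "\<And>i j. i \<in> II \<Longrightarrow> j \<in> II \<Longrightarrow> \<rho>\<rho> j < \<rho>\<rho> i \<Longrightarrow> B (ff i) (hh j) = 0"
proof -
  show "finite II" by simp
  show "inj_on \<rho>\<rho> II" using inj_on_subset[OF rho_inj I_sub] .
  show "B (ff i) (hh i) \<noteq> 0" if "i \<in> II" for i
  proof -
    obtain t j where i0: "i = (t, j)" by (cases i)
    hence i: "i = (t, j)" "1 \<le> t" "t \<le> r" "j < P t" using that by auto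
    have "B (ff i) (hh i) = B (gpow g (int (P t) - int j) (gpow g (int j) (v t))) (v t)"
      using i gp_B_shift2 by simp
    also have "\<dots> = B (gpow g (int (P t)) (v t)) (v t)" by (simp add: gp_add[symmetric])
    finally show ?thesis using hn[OF i(2,3)] B_refl by auto
  qed
  show "B (ff i) (hh j) = 0" if ij: "i \<in> II" "j \<in> II" "\<rho>\<rho> j < \<rho>\<rho> i" for i j
  proof -
    obtain t a where i0: "i = (t, a)" by (cases i)
    hence i: "i = (t, a)" "1 \<le> t" "t \<le> r" "a < P t" using ij by auto
    obtain t' b where j0: "j = (t', b)" by (cases j)
    hence j: "j = (t', b)" "1 \<le> t'" "t' \<le> r" "b < P t'" using ij by auto
    have lt: "P t' - b < P t - a \<or> (P t' - b = P t - a \<and> t' < t)"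
      using rho_less[of t t' b a] ij i j r by auto
    define e where "e = int a + int (P t') - int b"
    have "B (ff i) (hh j) = B (gpow g (int (P t') - int b) (gpow g (int a) (v t))) (v t')"
      using i j gp_B_shift2 by simp
    also have "\<dots> = B (gpow g e (v t)) (v t')" unfolding e_def by (simp add: gp_add[symmetric] algebra_simps)
    finally have eq: "B (ff i) (hh j) = B (gpow g e (v t)) (v t')" .
    have e1: "1 \<le> e" using j unfolding e_def by simp
    have Pt: "t' < t \<Longrightarrow> P t \<le> P t'" "t < t' \<Longrightarrow> P t' \<le> P t" using P_anti i j r by auto
    have "(t = t' \<and> e \<le> int (P t) - 1) \<or> (t < t' \<and> e \<le> int (P t) - 1) \<or> (t' < t \<and> e \<le> int (P t'))"
      using lt Pt i j unfolding e_def by (cases "t = t'"; cases "t < t'") auto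
    thus ?thesis using eq Bz[OF i(2,3) j(2,3) e1] by simp
  qed
qed

lemma II_ple: "card II = ple p r" using card_I[OF r] .

lemma inter1: "W (ple p r) \<inter> perp B (span (Cset v r)) = {0}"
proof -
  have "x = 0" if x: "x \<in> W (ple p r)" "x \<in> perp B (span (Cset v r))" for x
  proof (rule tri_b[OF tri_hyps])
    show "x \<in> span (ff ` II)" using x hW ff_I by simp
    show "B x (hh j) = 0" if "j \<in> II" for j
      using x(2) that span_superset[of "Cset v r"] unfolding perp_def Cset_def by blast
  qed
  moreover have "0 \<in> W (ple p r)" using W_sub[of "ple p r"] ple_le[of r] by (simp add: subspace_0)
  moreover have "0 \<in> perp B (span (Cset v r))" unfolding perp_def by simp
  ultimately show ?thesis by blast
qed

lemma dsum_r: "direct_sum_UNIV (W (ple p r)) (perp B (span (Cset v r)))"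
proof (rule direct_sum_dim[OF _ perp_sub inter1])
  show "subspace (W (ple p r))" using W_sub ple_le[of r] by simp
  have "dim (span (Cset v r)) \<le> ple p r"
  proof -
    have "dim (span (Cset v r)) = dim (Cset v r)" by simp
    also have "\<dots> \<le> card (Cset v r)" using dim_le_card[of "Cset v r" "Cset v r"] span_superset
      unfolding Cset_def by simp
    also have "\<dots> \<le> card II" unfolding Cset_def by (rule card_image_le) simp
    finally show ?thesis using II_ple by simp
  qed
  moreover have "N \<le> dim (perp B (span (Cset v r))) + dim (span (Cset v r))" by (rule perp_dim)
  moreover have "dim (W (ple p r)) = ple p r" using W_dim ple_le[of r] by simp
  ultimately show "N \<le> dim (W (ple p r)) + dim (perp B (span (Cset v r)))" by linarith
qed


lemma C_hh: "Cset v r = hh ` II" unfolding Cset_def by simp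

lemma FJ1: "Fset v r \<subseteq> ff ` II \<union> hh ` II"
proof
  fix y assume "y \<in> Fset v r"
  then obtain z where z: "y = (\<lambda>(t, i). gpow g (- int (P t) + int i) (v t)) z" "z \<in> (SIGMA t:{1..r}. {..<2 * P t})"
    unfolding Fset_def by (rule imageE)
  obtain t i where zz: "z = (t, i)" by (cases z)
  have ti: "t \<in> {1..r}" "i < 2 * P t" "y = gpow g (- int (P t) + int i) (v t)" using z zz by simp_all
  show "y \<in> ff ` II \<union> hh ` II"
  proof (cases "i < P t")
    case True
    have "(t, i) \<in> II" using ti True by simp
    hence "hh (t, i) \<in> hh ` II" by (rule imageI)
    moreover have "y = hh (t, i)" using ti by simp
    ultimately show ?thesis by simp
  next
    case False
    hence e: "- int (P t) + int i = int (i - P t)" by simp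
    have y: "y = ff (t, i - P t)" by (simp only: ti(3) e prod.case)
    have "(t, i - P t) \<in> II" using ti False by simp
    hence "ff (t, i - P t) \<in> ff ` II" by (rule imageI)
    thus ?thesis using y by simp
  qed
qed

lemma FJ2: "ff ` II \<subseteq> Fset v r"
proof
  fix y assume "y \<in> ff ` II"
  then obtain z where z: "y = ff z" "z \<in> II" by (rule imageE)
  obtain t j where zz: "z = (t, j)" by (cases z)
  have tj: "t \<in> {1..r}" "j < P t" "y = gpow g (int j) (v t)" using z zz by simp_all
  have e: "- int (P t) + int (j + P t) = int j" by simp
  have "y = (\<lambda>(t, i). gpow g (- int (P t) + int i) (v t)) (t, j + P t)" by (simp only: tj(3) e prod.case)
  moreover have "(t, j + P t) \<in> (SIGMA t:{1..r}. {..<2 * P t})" using tj by simp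
  hence "(\<lambda>(t, i). gpow g (- int (P t) + int i) (v t)) (t, j + P t) \<in> Fset v r" unfolding Fset_def by (rule imageI)
  ultimately show "y \<in> Fset v r" by simp
qed

lemma FJ3: "hh ` II \<subseteq> Fset v r"
proof
  fix y assume "y \<in> hh ` II"
  then obtain z where z: "y = hh z" "z \<in> II" by (rule imageE)
  obtain t j where zz: "z = (t, j)" by (cases z)
  have tj: "t \<in> {1..r}" "j < P t" "y = gpow g (- int (P t) + int j) (v t)" using z zz by simp_all
  have "(t, j) \<in> (SIGMA t:{1..r}. {..<2 * P t})" using tj by simp
  hence "(\<lambda>(t, i). gpow g (- int (P t) + int i) (v t)) (t, j) \<in> Fset v r" unfolding Fset_def by (rule imageI)
  thus "y \<in> Fset v r" using tj by simp
qed

lemma FJ: "Fset v r = ff ` II \<union> hh ` II" using FJ1 FJ2 FJ3 by blast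

lemma Wr_sub: "subspace (W (ple p r))" using W_sub ple_le[of r] by simp
lemma Wr_nn: "W (ple p r) \<subseteq> W nn" using W_le_nn ple_le[of r] by simp

lemma inter2: "W (ple p r) \<inter> span (Cset v r) = {0}"
proof -
  have "x = 0" if x: "x \<in> W (ple p r)" "x \<in> span (Cset v r)" for x
  proof (rule tri_a[OF tri_hyps])
    show "x \<in> span (hh ` II)" using x C_hh by simp
    show "B (ff i) x = 0" if "i \<in> II" for i
    proof -
      have "ff i \<in> W (ple p r)" using that hW ff_I span_superset by blast
      thus ?thesis using W_iso Wr_nn x(1) by blast
    qed
  qed
  moreover have "0 \<in> W (ple p r)" using Wr_sub by (simp add: subspace_0)
  ultimately show ?thesis using span_zero by blast
qed

lemma dimC: "ple p r \<le> dim (span (Cset v r))"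
proof -
  have "dim {x + y |x y. x \<in> W (ple p r) \<and> y \<in> perp B (span (Cset v r))}
        = dim (W (ple p r)) + dim (perp B (span (Cset v r)))"
    by (rule dim_sum_disj[OF Wr_sub perp_sub inter1])
  moreover have "dim {x + y |x y. x \<in> W (ple p r) \<and> y \<in> perp B (span (Cset v r))} \<le> N" by (rule dim_le_N)
  moreover have "N \<le> dim (perp B (span (Cset v r))) + dim (span (Cset v r))" by (rule perp_dim)
  moreover have "dim (W (ple p r)) = ple p r" using W_dim ple_le[of r] by simp
  ultimately show ?thesis by linarith
qed

lemma spanF: "span (Fset v r) = {a + c |a c. a \<in> W (ple p r) \<and> c \<in> span (Cset v r)}"
  unfolding FJ span_Un using hW ff_I C_hh by simp

lemma card_F: "card (Fset v r) \<le> 2 * ple p r"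
  unfolding Fset_def using card_image_le[of "SIGMA t:{1..r}. {..<2 * P t}"] card_J[OF r] by simp

lemma dim_card_F: "dim (Fset v r) \<le> card (Fset v r)"
  using dim_le_card[of "Fset v r" "Fset v r"] span_superset unfolding Fset_def by simp

lemma dimF: "dim (Fset v r) = 2 * ple p r"
proof -
  have "dim (span (Fset v r)) = dim (W (ple p r)) + dim (span (Cset v r))"
    unfolding spanF by (rule dim_sum_disj[OF Wr_sub subspace_span inter2])
  hence a: "2 * ple p r \<le> dim (Fset v r)" using dimC W_dim ple_le[of r] by simp
  have "dim (Fset v r) \<le> card (Fset v r)" using dim_le_card[of "Fset v r" "Fset v r"] span_superset
    unfolding Fset_def by simp
  thus ?thesis using a card_F by simp
qed

lemma indep_r: "indep_family scale (\<lambda>(t, i). gpow g (- int (P t) + int i) (v t)) (SIGMA t:{1..r}. {..<2 * P t})"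
proof -
  have c: "card (Fset v r) = 2 * ple p r" using dimF card_F dim_card_F by linarith
  have inj: "inj_on (\<lambda>(t, i). gpow g (- int (P t) + int i) (v t)) (SIGMA t:{1..r}. {..<2 * P t})"
    by (rule eq_card_imp_inj_on) (use c card_J[OF r] in \<open>simp_all add: Fset_def\<close>)
  have fin: "finite (Fset v r)" unfolding Fset_def by simp
  have "independent (Fset v r)"
    using fd.card_eq_dim[of "Fset v r" "Fset v r"] c dimF fin span_superset by simp
  thus ?thesis unfolding indep_family_def Fset_def using inj by simp
qed

lemma nondeg: assumes x: "x \<in> span (Fset v r)" and o: "\<And>y. y \<in> Fset v r \<Longrightarrow> B x y = 0"
  shows "x = 0"
proof -
  obtain a c where ac: "x = a + c" "a \<in> W (ple p r)" "c \<in> span (Cset v r)" using x spanF by blast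
  have c0: "c = 0"
  proof (rule tri_a[OF tri_hyps])
    show "c \<in> span (hh ` II)" using ac C_hh by simp
    show "B (ff i) c = 0" if "i \<in> II" for i
    proof -
      have fi: "ff i \<in> W (ple p r)" using that hW ff_I span_superset by blast
      have "ff i \<in> Fset v r" using that FJ by blast
      hence "B (ff i) x = 0" using o B_refl by blast
      moreover have "B (ff i) a = 0" using W_iso Wr_nn fi ac(2) by blast
      ultimately show ?thesis using ac(1) by (simp add: B_add2)
    qed
  qed
  have "a = 0"
  proof (rule tri_b[OF tri_hyps])
    show "a \<in> span (ff ` II)" using ac hW ff_I by simp
    show "B a (hh j) = 0" if "j \<in> II" for j
      using o[of "hh j"] that FJ ac(1) c0 by auto
  qed
  thus ?thesis using ac c0 by simp
qed
end
end

context ctx begin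

lemma body_cong:
  assumes r: "1 \<le> r" and e: "\<And>t. 1 \<le> t \<Longrightarrow> t \<le> r \<Longrightarrow> v' t = v t"
  shows "body r v' = body r v"
proof -
  have er: "v' r = v r" using e r by simp
  have U: "(\<Union>t\<in>{1..<r}. span ((\<lambda>j. gpow g (int j) (v' t)) ` {..<P t})) =
           (\<Union>t\<in>{1..<r}. span ((\<lambda>j. gpow g (int j) (v t)) ` {..<P t}))"
    by (rule SUP_cong) (auto simp: e)
  have ii: "(\<forall>t\<in>{1..<r}. \<forall>i\<in>{- int (P t) .. int (P t) - 1}. B (gpow g i (v' t)) (v' r) = 0) =
            (\<forall>t\<in>{1..<r}. \<forall>i\<in>{- int (P t) .. int (P t) - 1}. B (gpow g i (v t)) (v r) = 0)"
    using e er by auto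
  have F1: "\<And>x. x \<in> (SIGMA t:{1..r}. {..<2 * P t}) \<Longrightarrow>
     (\<lambda>(t, i). gpow g (- int (P t) + int i) (v' t)) x = (\<lambda>(t, i). gpow g (- int (P t) + int i) (v t)) x"
    using e by auto
  have F: "indep_family scale (\<lambda>(t, i). gpow g (- int (P t) + int i) (v' t)) (SIGMA t:{1..r}. {..<2 * P t}) =
           indep_family scale (\<lambda>(t, i). gpow g (- int (P t) + int i) (v t)) (SIGMA t:{1..r}. {..<2 * P t})"
  proof -
    have a: "inj_on (\<lambda>(t, i). gpow g (- int (P t) + int i) (v' t)) (SIGMA t:{1..r}. {..<2 * P t}) =
             inj_on (\<lambda>(t, i). gpow g (- int (P t) + int i) (v t)) (SIGMA t:{1..r}. {..<2 * P t})"
      by (rule inj_on_cong) (rule F1)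
    have b: "(\<lambda>(t, i). gpow g (- int (P t) + int i) (v' t)) ` (SIGMA t:{1..r}. {..<2 * P t}) =
             (\<lambda>(t, i). gpow g (- int (P t) + int i) (v t)) ` (SIGMA t:{1..r}. {..<2 * P t})"
      by (rule image_cong[OF refl]) (rule F1)
    show ?thesis unfolding indep_family_def a b by (rule refl)
  qed
  have C: "(\<lambda>(t, i). gpow g (- int (P t) + int i) (v' t)) ` (SIGMA t:{1..r}. {..<P t}) =
           (\<lambda>(t, i). gpow g (- int (P t) + int i) (v t)) ` (SIGMA t:{1..r}. {..<P t})"
    by (rule image_cong) (auto simp: e)
  show ?thesis unfolding body_def U F C unfolding ii unfolding er by (rule refl)
qed


lemma sqrt_ex: assumes K: "(K::'a) \<noteq> 0" shows "\<exists>m. m * m * K = 1"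
proof -
  let ?f = "[:- inverse K, 0, 1:] :: 'a poly"
  have "degree ?f = 2" by simp
  then obtain m where "poly ?f m = 0" using k unfolding alg_closed_def by (metis zero_less_numeral)
  hence "m * m = inverse K" by (simp add: algebra_simps)
  hence "m * m * K = inverse K * K" by simp
  also have "\<dots> = 1" using K by simp
  finally show ?thesis by blast
qed

lemma body_form_i:
  "span ((\<Union>t\<in>{1..<r}. span ((\<lambda>j. gpow g (int j) (v t)) ` {..<P t})) \<union> (\<lambda>j. gpow g (int j) (v r)) ` {..<i})
   = span (Aset v r \<union> Zs (v r) i)"
  unfolding Aset_Union Zs_def by (rule span_Un_spans)

context
  fixes r :: nat and v :: "nat \<Rightarrow> 'v"
  assumes r: "1 \<le> r" "r \<le> sig" and good: "\<forall>r'\<in>{1..<r}. body r' v"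
begin

lemma exists_c: "\<exists>c. c \<in> W (plt p r + 1) \<and> c \<notin> W (plt p r) \<and>
   (\<forall>t\<in>{1..<r}. \<forall>i\<in>{- int (P t) .. int (P t) - 1}. B (gpow g i (v t)) c = 0)"
proof -
  let ?s = "plt p r"
  have sl: "?s + P r \<le> nn" by (rule s_le[OF r good])
  have pr: "1 \<le> P r" using P_pos r by simp
  have sN: "?s + 1 \<le> N" using sl pr by simp
  have "\<not> W (?s + 1) \<subseteq> W ?s"
  proof
    assume "W (?s + 1) \<subseteq> W ?s"
    hence "dim (W (?s + 1)) \<le> dim (W ?s)" by (rule fd.dim_subset)
    thus False using W_dim[OF sN] W_dim[of ?s] sN by simp
  qed
  then obtain y where y: "y \<in> W (?s + 1)" "y \<notin> W ?s" by blast
  obtain a c where ac: "a \<in> W ?s" "c \<in> perp B (span (Cset v (r - 1)))" "y = a + c"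
    using dsum[OF r good] unfolding direct_sum_UNIV_def by blast
  have WW: "W ?s \<subseteq> W (?s + 1)" using W_mono sN by simp
  have "y - a \<in> W (?s + 1)" using y(1) ac(1) WW by (intro subspace_diff[OF W_sub[OF sN]]) auto
  moreover have "c = y - a" using ac(3) by simp
  ultimately have cW: "c \<in> W (?s + 1)" by simp
  have cnot: "c \<notin> W ?s"
  proof
    assume "c \<in> W ?s"
    hence "y \<in> W ?s" using ac W_sub[of ?s] sN by (simp add: subspace_add)
    thus False using y by simp
  qed
  have "?s + 1 \<le> nn" using sl pr by simp
  hence cnn: "c \<in> W nn" using cW W_le_nn by blast
  have o: "B (gpow g i (v t)) c = 0" if t: "t \<in> {1..<r}" and i: "i \<in> {- int (P t) .. int (P t) - 1}" for t i
  proof (cases "i < 0")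
    case True
    have "gpow g i (v t) \<in> Cset v (r - 1)"
    proof -
      have "- int (P t) + int (nat (i + int (P t))) = i" using i by simp
      hence "gpow g i (v t) = (\<lambda>(t, i). gpow g (- int (P t) + int i) (v t)) (t, nat (i + int (P t)))" by simp
      moreover have "(t, nat (i + int (P t))) \<in> (SIGMA t:{1..r - 1}. {..<P t})" using t i True by auto
      ultimately show ?thesis unfolding Cset_def by (metis (no_types, lifting) image_eqI)
    qed
    hence "B c (gpow g i (v t)) = 0" using ac(2) span_superset unfolding perp_def by blast
    thus ?thesis using B_refl by blast
  next
    case False
    have "gpow g (int (nat i)) (v t) \<in> Aset v r" using t i False by (intro Aset_mem) auto
    hence "gpow g i (v t) \<in> W nn" using False Aset_W[OF r good] W_le_nn[of ?s] sl by auto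
    thus ?thesis using W_iso cnn by blast
  qed
  show ?thesis using cW cnot o by blast
qed

end

end

context ctx begin

lemma step:
  assumes r: "1 \<le> r" "r \<le> sig" and good: "\<forall>r'\<in>{1..<r}. body r' v"
  shows "\<exists>x. \<forall>r'\<in>{1..r}. body r' (v(r := x))"
proof -
  let ?s = "plt p r"
  obtain c where c: "c \<in> W (?s + 1)" "c \<notin> W ?s"
     "\<forall>t\<in>{1..<r}. \<forall>i\<in>{- int (P t) .. int (P t) - 1}. B (gpow g i (v t)) c = 0"
    using exists_c[OF r good] by blast
  have K: "B c (gpow g (int (P r)) c) \<noteq> 0" by (rule Kne[OF r good c])
  obtain m where m: "m * m * B c (gpow g (int (P r)) c) = 1" using sqrt_ex[OF K] by blast
  hence m0: "m \<noteq> 0" by auto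
  define x where "x = m *s c"
  have sl: "?s + P r \<le> nn" by (rule s_le[OF r good])
  have pr: "1 \<le> P r" using P_pos r by simp
  have sN: "?s + 1 \<le> N" using sl pr by simp
  have xW: "x \<in> W (?s + 1)" unfolding x_def using c(1) W_sub[OF sN] by (simp add: subspace_scale)
  have xn: "x \<notin> W ?s"
  proof
    assume "x \<in> W ?s"
    hence "inverse m *s x \<in> W ?s" using W_sub[of ?s] sN by (simp add: subspace_scale)
    thus False using c(2) m0 unfolding x_def by simp
  qed
  have xo: "\<forall>t\<in>{1..<r}. \<forall>i\<in>{- int (P t) .. int (P t) - 1}. B (gpow g i (v t)) x = 0"
    using c(3) unfolding x_def by (simp add: B_scale2)
  have xn1: "B x (gpow g (int (P r)) x) = 1"
    using m unfolding x_def by (simp add: gp_scale B_scale1 B_scale2 algebra_simps)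
  define v' where "v' = v(r := x)"
  have v'r: "v' r = x" unfolding v'_def by simp
  have v't: "v' t = v t" if "t \<noteq> r" for t using that unfolding v'_def by simp
  have good': "\<forall>r'\<in>{1..<r}. body r' v'"
  proof
    fix r' assume r': "r' \<in> {1..<r}"
    have "body r' v' = body r' v" using r' by (intro body_cong) (auto intro!: v't)
    thus "body r' v'" using good r' by simp
  qed
  have xo': "\<forall>t\<in>{1..<r}. \<forall>i\<in>{- int (P t) .. int (P t) - 1}. B (gpow g i (v' t)) x = 0"
    using xo v't by auto
  note bW = blockW[OF r good' xW xn xo']
  have xnn: "gpow g (int j) x \<in> W nn" if "j < P r" for j
  proof -
    have "gpow g (int j) x \<in> Zs x (P r)" unfolding Zs_def using that by simp
    hence "gpow g (int j) x \<in> W (?s + P r)" using bW[of "P r"] span_superset by blast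
    thus ?thesis using W_le_nn[OF sl] by blast
  qed
  have x0: "x \<in> W nn" using xnn[of 0] pr by simp
  have z: "B x (gpow g i x) = 0" if i: "- int (P r) + 1 \<le> i" "i \<le> int (P r) - 1" for i
  proof (cases "0 \<le> i")
    case True
    have "gpow g i x \<in> W nn" using xnn[of "nat i"] True i by simp
    thus ?thesis using W_iso x0 by blast
  next
    case False
    have "gpow g (- i) x \<in> W nn" using xnn[of "nat (- i)"] False i by simp
    hence "B (gpow g (- i) x) x = 0" using W_iso x0 by blast
    thus ?thesis using gp_B_shift2 by simp
  qed
  have Qx: "Q x = 0" using W_Q[of "?s + 1" x] xW sl pr by simp
  have hW: "W (ple p r) = span (Aset v' (Suc r))"
    using bW[of "P r"] Aset_Suc[of v' r] r ple_eq[OF r] v'r by simp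
  have hii: "B (gpow g e (v' t')) (v' t) = 0"
    if "1 \<le> t'" "t' < t" "t \<le> r" "- int (P t') \<le> e" "e \<le> int (P t') - 1" for t t' e
  proof (cases "t = r")
    case True thus ?thesis using xo' that v'r by auto
  next
    case False thus ?thesis using orth_ii[OF r good', of t' t e] that by simp
  qed
  have hiii: "B (v' t) (gpow g e (v' t)) = 0"
    if "1 \<le> t" "t \<le> r" "- int (P t) + 1 \<le> e" "e \<le> int (P t) - 1" for t e
  proof (cases "t = r")
    case True thus ?thesis using z that v'r by simp
  next
    case False thus ?thesis using iii0[OF r good', of t e] that by simp
  qed
  have hn: "B (v' t) (gpow g (int (P t)) (v' t)) = 1" if "1 \<le> t" "t \<le> r" for t
  proof (cases "t = r")
    case True thus ?thesis using xn1 v'r by simp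
  next
    case False thus ?thesis using iii1[OF r good', of t] that by simp
  qed
  have br: "body r v'"
    unfolding body_def
  proof (intro conjI)
    show "\<forall>i\<le>P r. W (plt p r + i) = span ((\<Union>t\<in>{1..<r}. span ((\<lambda>j. gpow g (int j) (v' t)) ` {..<P t}))
        \<union> (\<lambda>j. gpow g (int j) (v' r)) ` {..<i})"
      unfolding body_form_i using bW v'r by simp
    show "\<forall>t\<in>{1..<r}. \<forall>i\<in>{- int (P t)..int (P t) - 1}. B (gpow g i (v' t)) (v' r) = 0"
      using xo' v'r by simp
    show "\<forall>i\<in>{- int (P r) + 1..int (P r) - 1}. B (v' r) (gpow g i (v' r)) = 0" using z v'r by simp
    show "Q (v' r) = 0" using Qx v'r by simp
    show "B (v' r) (gpow g (int (P r)) (v' r)) = 1" using xn1 v'r by simp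
    show "indep_family (*s) (\<lambda>(t, i). gpow g (- int (P t) + int i) (v' t)) (SIGMA t:{1..r}. {..<2 * P t})"
      by (rule indep_r[OF r(2) hW hii hiii hn])
    show "direct_sum_UNIV (W (ple p r)) (perp B (span ((\<lambda>(t, i). gpow g (- int (P t) + int i) (v' t)) ` (SIGMA t:{1..r}. {..<P t}))))"
      using dsum_r[OF r(2) hW hii hiii hn] unfolding Cset_def .
  qed
  have "\<forall>r'\<in>{1..r}. body r' v'"
  proof
    fix r' assume "r' \<in> {1..r}"
    thus "body r' v'" using good' br by (cases "r' = r") auto
  qed
  thus ?thesis unfolding v'_def by blast
qed

end

context ctx begin

lemma exists_all: "r \<le> sig \<Longrightarrow> \<exists>v. \<forall>r'\<in>{1..r}. body r' v"
proof (induction r)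
  case 0 thus ?case by simp
next
  case (Suc r)
  then obtain v where v: "\<forall>r'\<in>{1..r}. body r' v" by auto
  have "\<forall>r'\<in>{1..<Suc r}. body r' v" using v by auto
  then obtain x where "\<forall>r'\<in>{1..Suc r}. body r' (v(Suc r := x))" using step[of "Suc r" v] Suc.prems by auto
  thus ?case by blast
qed

lemma uniq:
  assumes v: "\<forall>r\<in>{1..sig}. body r v" and v': "\<forall>r\<in>{1..sig}. body r v'"
  shows "k \<in> {1..sig} \<Longrightarrow> v' k = v k \<or> v' k = - v k"
proof (induction k rule: less_induct)
  case (less r)
  have r: "1 \<le> r" "r \<le> sig" using less.prems by auto
  have good: "\<forall>r'\<in>{1..<r}. body r' v" using v r by auto
  have br: "body r v" and br': "body r v'" using v v' r by auto
  have IH: "\<And>t. 1 \<le> t \<Longrightarrow> t < r \<Longrightarrow> v' t = v t \<or> v' t = - v t" using less.IH r by auto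
  have pr: "1 \<le> P r" using P_pos r by simp
  have z1: "Zs y 1 = {y}" for y unfolding Zs_def by auto
  have "v' r \<in> W (plt p r + 1)" using body_i[OF br' pr] z1 by (simp add: span_base)
  moreover have "W (plt p r + 1) = span (insert (v r) (Aset v r))" using body_i[OF br pr] z1 by simp
  ultimately obtain m where m: "v' r - m *s v r \<in> span (Aset v r)" using span_breakdown_eq by blast
  define a where "a = v' r - m *s v r"
  have aW: "a \<in> W (plt p r)" using m WsA[OF r good] unfolding a_def by simp
  have oii: "B (gpow g i (v t)) (v r) = 0 \<and> B (gpow g i (v t)) (v' r) = 0"
    if "1 \<le> t" "t < r" "- int (P t) \<le> i" "i \<le> int (P t) - 1" for t i
  proof -
    have "B (gpow g i (v t)) (v r) = 0" using br that unfolding body_def by auto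
    moreover have "B (gpow g i (v' t)) (v' r) = 0" using br' that unfolding body_def by auto
    hence "B (gpow g i (v t)) (v' r) = 0" using IH[OF that(1,2)] by (auto simp: gp_neg B_neg1)
    ultimately show ?thesis by simp
  qed
  have "a \<in> perp B (Cset v (r - 1))"
    unfolding perp_def
  proof (safe)
    fix y assume "y \<in> Cset v (r - 1)"
    then obtain t i where ti: "1 \<le> t" "t \<le> r - 1" "i < P t" "y = gpow g (- int (P t) + int i) (v t)"
      unfolding Cset_def by auto
    have "B y (v r) = 0" "B y (v' r) = 0" using oii[of t "- int (P t) + int i"] ti by auto
    hence "B (v r) y = 0" "B (v' r) y = 0" using B_refl by blast+
    thus "B a y = 0" unfolding a_def by (simp add: B_diff1 B_scale1)
  qed
  hence "a \<in> perp B (span (Cset v (r - 1)))" by (simp add: perp_span)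
  hence a0: "a = 0" using aW dsum[OF r good] unfolding direct_sum_UNIV_def by blast
  hence vr: "v' r = m *s v r" unfolding a_def by simp
  have "1 = B (v' r) (gpow g (int (P r)) (v' r))" using br' unfolding body_def by simp
  also have "\<dots> = m * m * B (v r) (gpow g (int (P r)) (v r))" unfolding vr
    by (simp add: gp_scale B_scale1 B_scale2)
  also have "B (v r) (gpow g (int (P r)) (v r)) = 1" using br unfolding body_def by simp
  finally have "m * m = 1" by simp
  hence "(m - 1) * (m + 1) = 0" by (simp add: algebra_simps)
  hence "m = 1 \<or> m = -1" by (auto simp: add_eq_0_iff2)
  thus ?case using vr by auto
qed

end

context ctx begin

lemma sig_pos: "1 \<le> sig"
proof (rule ccontr)
  assume "\<not> 1 \<le> sig"
  hence "p = []" by (cases p) auto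
  thus False using p_sum N3 by simp
qed

lemma card_full_index: "card (full_index p) = 2 * nn"
proof -
  have "card (full_index p) = (\<Sum>t\<in>{1..sig}. card {- int (p ! (t - 1)) .. int (p ! (t - 1)) - 1})"
    unfolding full_index_def by (simp add: card_SigmaI)
  also have "\<dots> = (\<Sum>t\<in>{1..sig}. 2 * P t)" unfolding P_def by (intro sum.cong) auto
  also have "\<dots> = 2 * ple p sig" using sum_P[of sig] by (simp add: sum_distrib_left[symmetric])
  finally show ?thesis using ple_sig by simp
qed

lemma full_image: "full_family g p v ` full_index p = Fset v sig"
proof
  show "full_family g p v ` full_index p \<subseteq> Fset v sig"
  proof
    fix y assume "y \<in> full_family g p v ` full_index p"
    then obtain z where z: "y = full_family g p v z" "z \<in> full_index p" by (rule imageE)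
    obtain t j where zz: "z = (t, j)" by (cases z)
    have tj: "t \<in> {1..sig}" "- int (P t) \<le> j" "j \<le> int (P t) - 1" "y = gpow g j (v t)"
      using z zz unfolding full_index_def full_family_def P_def by simp_all
    have e: "- int (P t) + int (nat (j + int (P t))) = j" using tj by simp
    have "y = (\<lambda>(t, i). gpow g (- int (P t) + int i) (v t)) (t, nat (j + int (P t)))"
      by (simp only: tj(4) e prod.case)
    moreover have "(t, nat (j + int (P t))) \<in> (SIGMA t:{1..sig}. {..<2 * P t})" using tj by auto
    hence "(\<lambda>(t, i). gpow g (- int (P t) + int i) (v t)) (t, nat (j + int (P t))) \<in> Fset v sig"
      unfolding Fset_def by (rule imageI)
    ultimately show "y \<in> Fset v sig" by simp
  qed
  show "Fset v sig \<subseteq> full_family g p v ` full_index p"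
  proof
    fix y assume "y \<in> Fset v sig"
    then obtain z where z: "y = (\<lambda>(t, i). gpow g (- int (P t) + int i) (v t)) z" "z \<in> (SIGMA t:{1..sig}. {..<2 * P t})"
      unfolding Fset_def by (rule imageE)
    obtain t i where zz: "z = (t, i)" by (cases z)
    have ti: "t \<in> {1..sig}" "i < 2 * P t" "y = gpow g (- int (P t) + int i) (v t)" using z zz by simp_all
    have "(t, - int (P t) + int i) \<in> full_index p" using ti unfolding full_index_def P_def by auto
    hence "full_family g p v (t, - int (P t) + int i) \<in> full_family g p v ` full_index p" by (rule imageI)
    thus "y \<in> full_family g p v ` full_index p" using ti unfolding full_family_def by simp
  qed
qed


lemma main:
  "\<exists>v. props_i_v scale B Q g W p v \<and>
           (\<forall>v'. props_i_v scale B Q g W p v' \<longrightarrow>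
              (\<forall>k\<in>{1..length p}. v' k = v k \<or> v' k = - v k)) \<and>
           (even N \<longrightarrow> basis_family scale (full_family g p v) (full_index p)) \<and>
           (odd N \<longrightarrow> (\<exists>u. props_last B Q g p v u \<and>
              (\<forall>u'. props_last B Q g p v u' \<longrightarrow> u' = u \<or> u' = - u) \<and>
              basis_family scale (\<lambda>x. case x of None \<Rightarrow> u | Some y \<Rightarrow> full_family g p v y)
                 (insert None (Some ` full_index p))))"
proof -
  obtain v where v: "\<forall>r\<in>{1..sig}. body r v" using exists_all[of sig] by auto
  have bd: "body t v" if "1 \<le> t" "t \<le> sig" for t using v that by auto
  have s1: "1 \<le> sig" "sig \<le> sig" using sig_pos by auto
  have hW: "W (ple p sig) = span (Aset v (Suc sig))"
  proof -
    have pne: "p \<noteq> []" using sig_pos by auto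
    show ?thesis using body_i[OF bd[OF s1], of "P sig"] Aset_Suc[of v sig] pne ple_eq[OF s1] by simp
  qed
  have hii: "B (gpow g e (v t')) (v t) = 0"
    if "1 \<le> t'" "t' < t" "t \<le> sig" "- int (P t') \<le> e" "e \<le> int (P t') - 1" for t t' e
    using bd[of t] that unfolding body_def by auto
  have hiii: "B (v t) (gpow g e (v t)) = 0"
    if "1 \<le> t" "t \<le> sig" "- int (P t) + 1 \<le> e" "e \<le> int (P t) - 1" for t e
    using bd[of t] that unfolding body_def by auto
  have hn: "B (v t) (gpow g (int (P t)) (v t)) = 1" if "1 \<le> t" "t \<le> sig" for t
    using bd[of t] that unfolding body_def by auto
  have dF: "dim (Fset v sig) = 2 * nn" using dimF[OF s1(2) hW hii hiii hn] ple_sig by simp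
  have iF: "indep_family scale (\<lambda>(t, i). gpow g (- int (P t) + int i) (v t)) (SIGMA t:{1..sig}. {..<2 * P t})"
    by (rule indep_r[OF s1(2) hW hii hiii hn])
  have nd: "x = 0" if "x \<in> span (Fset v sig)" "\<And>y. y \<in> Fset v sig \<Longrightarrow> B x y = 0" for x
    using nondeg[OF s1(2) hW hii hiii hn] that by blast
  have cF: "card (Fset v sig) = 2 * nn"
    using iF card_J[OF s1(2)] ple_sig unfolding indep_family_def Fset_def by (simp add: card_image)
  have indF: "independent (Fset v sig)" using iF unfolding indep_family_def Fset_def by simp
  have injFull: "inj_on (full_family g p v) (full_index p)"
  proof -
    have fi: "finite (full_index p)" unfolding full_index_def by simp
    have "card (full_family g p v ` full_index p) = card (full_index p)"
      using full_image cF card_full_index by simp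
    thus ?thesis by (rule eq_card_imp_inj_on[OF fi])
  qed
  have finF: "finite (Fset v sig)" unfolding Fset_def by simp
  have pv: "props_i_v scale B Q g W p v" using v props_body by simp
  have uq: "\<forall>v'. props_i_v scale B Q g W p v' \<longrightarrow> (\<forall>k\<in>{1..length p}. v' k = v k \<or> v' k = - v k)"
    using uniq[OF v] props_body by blast
  have ev: "basis_family scale (full_family g p v) (full_index p)" if "even N"
  proof -
    have "dim (Fset v sig) = N" using dF that by simp
    hence "span (Fset v sig) = UNIV" using span_eq_UNIV_iff by simp
    thus ?thesis unfolding basis_family_def indep_family_def using injFull indF full_image by simp
  qed
  have od: "\<exists>u. props_last B Q g p v u \<and>
              (\<forall>u'. props_last B Q g p v u' \<longrightarrow> u' = u \<or> u' = - u) \<and>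
              basis_family scale (\<lambda>x. case x of None \<Rightarrow> u | Some y \<Rightarrow> full_family g p v y)
                 (insert None (Some ` full_index p))" if oddN: "odd N"
  proof -
    let ?E = "span (Fset v sig)"
    let ?P = "perp B ?E"
    have NN: "N = 2 * nn + 1" using oddN by presburger
    have EP: "?E \<inter> ?P = {0}"
    proof -
      have "x = 0" if "x \<in> ?E" "x \<in> ?P" for x
        using nd[OF that(1)] that(2) span_superset unfolding perp_def by blast
      moreover have "0 \<in> ?P" unfolding perp_def by simp
      ultimately show ?thesis using span_zero by blast
    qed
    have dE: "dim ?E = 2 * nn" using dF by simp
    have d1: "N \<le> dim ?P + dim ?E" by (rule perp_dim)
    have "dim {x + y |x y. x \<in> ?E \<and> y \<in> ?P} = dim ?E + dim ?P"
      by (rule dim_sum_disj[OF subspace_span perp_sub EP])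
    moreover have "dim {x + y |x y. x \<in> ?E \<and> y \<in> ?P} \<le> N" by (rule dim_le_N)
    ultimately have d2: "dim ?E + dim ?P \<le> N" by simp
    have dP: "dim ?P = 1" using d1 d2 dE NN by linarith
    have ds: "direct_sum_UNIV ?E ?P" by (rule direct_sum_dim[OF subspace_span perp_sub EP]) (use d1 in linarith)
    obtain Bs where Bs: "finite Bs" "Bs \<subseteq> ?P" "independent Bs" "span Bs = ?P" "card Bs = dim ?P"
      using fd.basis_subspace_exists[OF perp_sub] by blast
    have "card Bs = 1" using Bs(5) dP by simp
    then obtain u0 where u0: "Bs = {u0}" by (rule card_1_singletonE)
    have u00: "u0 \<noteq> 0" using Bs(3) u0 by auto
    have Pu0: "?P = span {u0}" using Bs(4) u0 by simp
    have u0P: "u0 \<in> ?P" using Bs(2) u0 by simp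
    have allperp: "u0 \<in> perp B UNIV" if Bu: "B u0 u0 = 0"
      unfolding perp_def
    proof (safe)
      fix y :: 'v
      obtain e w where ew: "e \<in> ?E" "w \<in> ?P" "y = e + w" using ds unfolding direct_sum_UNIV_def by blast
      obtain c where c: "w = c *s u0" using ew(2) Pu0 span_singleton by auto
      have "B u0 e = 0" using u0P ew(1) unfolding perp_def by blast
      moreover have "B u0 w = 0" using c Bu by (simp add: B_scale2)
      ultimately show "B u0 y = 0" using ew(3) by (simp add: B_add2)
    qed
    have Q0: "Q u0 \<noteq> 0"
      and cases2: "(\<forall>c x. Q (c *s x) = c * c * Q x)"
    proof -
      have frm: "(Q = (\<lambda>_. 0) \<and> (\<forall>x. B x x = 0) \<and> perp B UNIV = {0}) \<or>
          (Q \<noteq> (\<lambda>_. 0) \<and> (\<forall>c x. Q (c *s x) = c * c * Q x) \<and>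
           (\<forall>x y. B x y = Q (x + y) - Q x - Q y) \<and> inj_on Q (perp B UNIV))"
        using form unfolding form_setting_def by blast
      have not1: "\<not> (\<forall>x. B x x = 0 \<and> perp B UNIV = {0})"
      proof
        assume a: "\<forall>x. B x x = 0 \<and> perp B UNIV = {0}"
        hence "u0 \<in> perp B UNIV" using allperp by blast
        thus False using a u00 by blast
      qed
      hence c2: "(\<forall>c x. Q (c *s x) = c * c * Q x) \<and>
           (\<forall>x y. B x y = Q (x + y) - Q x - Q y) \<and> inj_on Q (perp B UNIV)" using frm by blast
      thus "\<forall>c x. Q (c *s x) = c * c * Q x" by blast
      have c2a: "\<forall>c x. Q (c *s x) = c * c * Q x" using c2 by blast
      show "Q u0 \<noteq> 0"
      proof
        assume q: "Q u0 = 0"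
        have "u0 + u0 = 2 *s u0" by (metis one_add_one scale_left_distrib scale_one)
        moreover have "B u0 u0 = Q (u0 + u0) - Q u0 - Q u0" using c2 by blast
        ultimately have "B u0 u0 = Q (2 *s u0) - Q u0 - Q u0" by simp
        hence "B u0 u0 = 0" using c2a[rule_format, of 2 u0] q by simp
        hence up: "u0 \<in> perp B UNIV" by (rule allperp)
        have zp: "0 \<in> perp B UNIV" unfolding perp_def by simp
        have "Q 0 = Q (0 *s 0)" by simp
        also have "\<dots> = 0" using c2a[rule_format, of 0 0] by simp
        finally have "Q 0 = 0" .
        hence "Q u0 = Q 0" using q by simp
        hence "u0 = 0" using c2 up zp unfolding inj_on_def by blast
        thus False using u00 by simp
      qed
    qed
    obtain m where m: "m * m * Q u0 = 1" using sqrt_ex[OF Q0] by blast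
    define u where "u = m *s u0"
    have Qu: "Q u = 1" unfolding u_def using cases2[rule_format, of m u0] m by simp
    have uP: "u \<in> ?P" unfolding u_def using u0P perp_sub by (simp add: subspace_scale)
    have u_ne: "u \<noteq> 0"
    proof
      assume "u = 0"
      hence "Q u = Q (0 *s 0)" by simp
      also have "\<dots> = 0" using cases2[rule_format, of 0 0] by simp
      finally show False using Qu by simp
    qed
    have fullF: "gpow g i (v t) \<in> Fset v sig" if "t \<in> {1..length p}" "i \<in> {- int (p ! (t - 1)) .. int (p ! (t - 1)) - 1}" for t i
    proof -
      have "(t, i) \<in> full_index p" using that unfolding full_index_def by simp
      hence "full_family g p v (t, i) \<in> Fset v sig" using full_image by blast
      thus ?thesis unfolding full_family_def by simp
    qed
    have pl: "props_last B Q g p v u"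
      unfolding props_last_def
    proof (intro conjI ballI)
      fix t i assume "t \<in> {1..length p}" "i \<in> {- int (p ! (t - 1)) .. int (p ! (t - 1)) - 1}"
      hence "gpow g i (v t) \<in> ?E" using fullF span_superset by blast
      hence "B u (gpow g i (v t)) = 0" using uP unfolding perp_def by blast
      thus "B (gpow g i (v t)) u = 0" using B_refl by blast
    qed (rule Qu)
    have uq2: "\<forall>u'. props_last B Q g p v u' \<longrightarrow> u' = u \<or> u' = - u"
    proof (intro allI impI)
      fix u' assume pu: "props_last B Q g p v u'"
      have "u' \<in> perp B (Fset v sig)"
        unfolding perp_def
      proof safe
        fix y assume "y \<in> Fset v sig"
        then obtain z where z: "y = full_family g p v z" "z \<in> full_index p" using full_image by blast
        obtain t i where zz: "z = (t, i)" by (cases z)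
        have "B y u' = 0" using pu z zz unfolding props_last_def full_index_def full_family_def by auto
        thus "B u' y = 0" using B_refl by blast
      qed
      hence "u' \<in> ?P" by (simp add: perp_span)
      then obtain c where c: "u' = c *s u0" using Pu0 span_singleton by auto
      have "c * c * Q u0 = 1" using pu c cases2[rule_format, of c u0] unfolding props_last_def by simp
      hence "c * c = m * m" using m Q0 by (metis mult_right_cancel)
      hence "(c - m) * (c + m) = 0" by (simp add: algebra_simps)
      hence "c = m \<or> c = - m" by (auto simp: add_eq_0_iff2)
      thus "u' = u \<or> u' = - u" using c unfolding u_def by auto
    qed
    have unotE: "u \<notin> ?E" using EP uP u_ne by blast
    have img: "(\<lambda>x. case x of None \<Rightarrow> u | Some y \<Rightarrow> full_family g p v y) ` (insert None (Some ` full_index p))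
        = insert u (Fset v sig)"
      using full_image by (auto simp: image_image)
    have bf: "basis_family scale (\<lambda>x. case x of None \<Rightarrow> u | Some y \<Rightarrow> full_family g p v y)
                 (insert None (Some ` full_index p))"
      unfolding basis_family_def indep_family_def
    proof (intro conjI)
      show "inj_on (\<lambda>x. case x of None \<Rightarrow> u | Some y \<Rightarrow> full_family g p v y) (insert None (Some ` full_index p))"
      proof (rule inj_onI)
        fix a b assume ab: "a \<in> insert None (Some ` full_index p)" "b \<in> insert None (Some ` full_index p)"
          and e: "(case a of None \<Rightarrow> u | Some y \<Rightarrow> full_family g p v y) = (case b of None \<Rightarrow> u | Some y \<Rightarrow> full_family g p v y)"
        have inF: "full_family g p v y \<in> ?E" if "y \<in> full_index p" for y
          using that full_image span_superset by blast
        show "a = b"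
        proof (cases a)
          case None
          show ?thesis
          proof (cases b)
            case (Some y) thus ?thesis using None e ab inF unotE by auto
          qed (use None in simp)
        next
          case (Some x)
          show ?thesis
          proof (cases b)
            case None thus ?thesis using Some e ab inF unotE by auto
          next
            case (Some y) thus ?thesis using \<open>a = Some x\<close> e ab injFull unfolding inj_on_def by auto
          qed
        qed
      qed
      show "\<not> dependent ((\<lambda>x. case x of None \<Rightarrow> u | Some y \<Rightarrow> full_family g p v y) ` insert None (Some ` full_index p))"
        unfolding img using independent_insert unotE indF by simp
      have "UNIV \<subseteq> span (insert u (Fset v sig))"
      proof
        fix y :: 'v
        obtain e w where ew: "e \<in> ?E" "w \<in> ?P" "y = e + w" using ds unfolding direct_sum_UNIV_def by blast
        obtain c where c: "w = c *s u0" using ew(2) Pu0 span_singleton by auto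
        have m0: "m \<noteq> 0" using m by auto
        have "w = (c / m) *s u" unfolding u_def c using m0 by simp
        hence "w \<in> span (insert u (Fset v sig))" by (simp add: span_base span_scale)
        moreover have "e \<in> span (insert u (Fset v sig))" using ew(1) span_mono[of "Fset v sig" "insert u (Fset v sig)"] by blast
        ultimately show "y \<in> span (insert u (Fset v sig))" using ew(3) by (simp add: span_add)
      qed
      thus "span ((\<lambda>x. case x of None \<Rightarrow> u | Some y \<Rightarrow> full_family g p v y) ` insert None (Some ` full_index p)) = UNIV"
        unfolding img by blast
    qed
    show ?thesis using pl uq2 bf by blast
  qed
  show ?thesis using pv uq ev od by blast
qed

end


theorem proposition3p3:
  fixes scale :: "'a::field \<Rightarrow> 'v::ab_group_add \<Rightarrow> 'v"
    and B :: "'v \<Rightarrow> 'v \<Rightarrow> 'a" and Q :: "'v \<Rightarrow> 'a"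
    and N :: nat and p :: "nat list"
    and W W' :: "nat \<Rightarrow> 'v set" and g :: "'v \<Rightarrow> 'v"
  assumes k: "alg_closed TYPE('a)"
    and vs: "vector_space scale"
    and fin: "\<exists>S. finite S \<and> module.span scale S = UNIV"
    and dimV: "vector_space.dim scale (UNIV :: 'v set) = N"
    and N3: "3 \<le> N"
    and form: "form_setting scale B Q"
    and part: "partition_of p (N div 2)"
    and flagW: "isoflag scale B Q N W"
    and flagW': "isoflag scale B Q N W'"
    and relpos: "\<forall>i\<in>{1..N}. relpos N W W' i = wperm p N i"
    and iso: "isometry scale B Q g"
    and gW: "\<forall>i\<le>N. g ` (W i) = W' i"
  shows "\<exists>v. props_i_v scale B Q g W p v \<and>
           (\<forall>v'. props_i_v scale B Q g W p v' \<longrightarrow>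
              (\<forall>k\<in>{1..length p}. v' k = v k \<or> v' k = - v k)) \<and>
           (even N \<longrightarrow> basis_family scale (full_family g p v) (full_index p)) \<and>
           (odd N \<longrightarrow> (\<exists>u. props_last B Q g p v u \<and>
              (\<forall>u'. props_last B Q g p v u' \<longrightarrow> u' = u \<or> u' = - u) \<and>
              basis_family scale (\<lambda>x. case x of None \<Rightarrow> u | Some y \<Rightarrow> full_family g p v y)
                 (insert None (Some ` full_index p))))"
proof -
  interpret ctx scale B Q N p W W' g
    using vs k fin dimV N3 form part flagW flagW' relpos iso gW
    by (simp add: ctx_def ctx_axioms_def)
  show ?thesis by (rule main)
qed

end
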